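(* Let $\mathcal{T}:\mathcal{M}_d\to\mathcal{M}_d$ and $\mathcal{S}:\mathcal{M}_{d'}\to\mathcal{M}_{d'}$ be quantum channels with peripheral projections $\mathcal{T}_P$, $\mathcal{S}_P$ and peripheral subspaces $\chi_{\mathcal{T}}$, $\chi_{\mathcal{S}}$. Then the peripheral projection of $\mathcal{T}\otimes\mathcal{S}$ is $(\mathcal{T}\otimes\mathcal{S})_P=\mathcal{T}_P\otimes\mathcal{S}_P$, and its peripheral subspace is $\chi_{\mathcal{T}\otimes\mathcal{S}}=\chi_{\mathcal{T}}\otimes\chi_{\mathcal{S}}$.
   Context: A quantum channel is a completely positive trace-preserving linear map. The peripheral subspace of a channel $\mathcal{T}$ is $\chi_{\mathcal{T}}=\mathrm{span}\{X:\mathcal{T}(X)=\lambda X,\ |\lambda|=1\}$. Writing the Jordan decomposition of $\mathcal{T}$ as $\mathcal{T}=\sum_\ell(\lambda_\ell\mathcal{P}_\ell+\mathcal{N}_\ell)$ with spectral projections $\mathcal{P}_\ell$ and nilpotents $\mathcal{N}_\ell$, the peripheral projection is $\mathcal{T}_P=\sum_{\ell:|\lambda_\ell|=1}\mathcal{P}_\ell$; it is a channel with $\mathcal{T}_P(\mathcal{M}_d)=\chi_{\mathcal{T}}$, $\mathcal{T}_P(X)=X$ for $X\in\chi_{\mathcal{T}}$, and $\mathcal{T}_P=\lim_{i\to\infty}\mathcal{T}^{t_i}$ for some increasing sequence of integers $t_i$. *)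

theory Defs
  imports Complex_Main "Jordan_Normal_Form.Matrix"
begin

text \<open>M_d is modelled as carrier_mat d d of complex matrices; a linear map on M_d
  is a function complex mat => complex mat, only its values on carrier_mat d d matter.\<close>

definition mat_trace :: "complex mat \<Rightarrow> complex" where
  "mat_trace A = (\<Sum>i<dim_row A. A $$ (i, i))"

definition mat_unit :: "nat \<Rightarrow> nat \<Rightarrow> nat \<Rightarrow> complex mat" where
  "mat_unit d i j = mat d d (\<lambda>(p, q). if p = i \<and> q = j then 1 else 0)"

text \<open>Kronecker product; index (i,k) of M_d (x) M_d' corresponds to i*d'+k.\<close>
definition mat_kron :: "complex mat \<Rightarrow> complex mat \<Rightarrow> complex mat" where
  "mat_kron A B = mat (dim_row A * dim_row B) (dim_col A * dim_col B)
     (\<lambda>(p, q). A $$ (p div dim_row B, q div dim_col B) * B $$ (p mod dim_row B, q mod dim_col B))"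

text \<open>Tensor product of linear maps T on M_d and S on M_d': the linear map on M_(d*d')
  determined by (T (x) S)(E_ij (x) E_kl) = T(E_ij) (x) S(E_kl).\<close>
definition tensor_map :: "nat \<Rightarrow> nat \<Rightarrow> (complex mat \<Rightarrow> complex mat) \<Rightarrow> (complex mat \<Rightarrow> complex mat)
    \<Rightarrow> complex mat \<Rightarrow> complex mat" where
  "tensor_map d d' T S X = mat (d * d') (d * d') (\<lambda>(p, q).
     \<Sum>i<d. \<Sum>j<d. \<Sum>k<d'. \<Sum>l<d'.
       X $$ (i * d' + k, j * d' + l) * mat_kron (T (mat_unit d i j)) (S (mat_unit d' k l)) $$ (p, q))"

definition lin_map :: "nat \<Rightarrow> (complex mat \<Rightarrow> complex mat) \<Rightarrow> bool" where
  "lin_map d T \<longleftrightarrow>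
     (\<forall>X \<in> carrier_mat d d. T X \<in> carrier_mat d d) \<and>
     (\<forall>X \<in> carrier_mat d d. \<forall>Y \<in> carrier_mat d d. T (X + Y) = T X + T Y) \<and>
     (\<forall>X \<in> carrier_mat d d. \<forall>c. T (c \<cdot>\<^sub>m X) = c \<cdot>\<^sub>m T X)"

definition mat_psd :: "nat \<Rightarrow> complex mat \<Rightarrow> bool" where
  "mat_psd n A \<longleftrightarrow> A \<in> carrier_mat n n \<and>
     (\<forall>v \<in> carrier_vec n. let z = conjugate v \<bullet> (A *\<^sub>v v) in Im z = 0 \<and> Re z \<ge> 0)"

definition completely_positive :: "nat \<Rightarrow> (complex mat \<Rightarrow> complex mat) \<Rightarrow> bool" where
  "completely_positive d T \<longleftrightarrow>
     (\<forall>k. \<forall>X. mat_psd (d * k) X \<longrightarrow> mat_psd (d * k) (tensor_map d k T id X))"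

definition trace_preserving :: "nat \<Rightarrow> (complex mat \<Rightarrow> complex mat) \<Rightarrow> bool" where
  "trace_preserving d T \<longleftrightarrow> (\<forall>X \<in> carrier_mat d d. mat_trace (T X) = mat_trace X)"

definition quantum_channel :: "nat \<Rightarrow> (complex mat \<Rightarrow> complex mat) \<Rightarrow> bool" where
  "quantum_channel d T \<longleftrightarrow> lin_map d T \<and> completely_positive d T \<and> trace_preserving d T"

definition mat_span :: "nat \<Rightarrow> complex mat set \<Rightarrow> complex mat set" where
  "mat_span d A = {X \<in> carrier_mat d d. \<exists>(n::nat) c v. (\<forall>i<n. v i \<in> A) \<and>
     (\<forall>p<d. \<forall>q<d. X $$ (p, q) = (\<Sum>i<n. c i * v i $$ (p, q)))}"

definition peripheral_subspace :: "nat \<Rightarrow> (complex mat \<Rightarrow> complex mat) \<Rightarrow> complex mat set" where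
  "peripheral_subspace d T =
     mat_span d {X \<in> carrier_mat d d. \<exists>c. cmod c = 1 \<and> T X = c \<cdot>\<^sub>m X}"

text \<open>Generalized eigenspace ker (T - \<lambda> id)^(d^2), i.e. the range of the spectral projection P_\<lambda>.\<close>
definition gen_eigenspace :: "nat \<Rightarrow> (complex mat \<Rightarrow> complex mat) \<Rightarrow> complex \<Rightarrow> complex mat set" where
  "gen_eigenspace d T c = {X \<in> carrier_mat d d.
     ((\<lambda>Y. T Y - c \<cdot>\<^sub>m Y) ^^ (d * d)) X = 0\<^sub>m d d}"

text \<open>Peripheral projection T_P = sum of the spectral projections P_\<lambda> with |\<lambda>| = 1:
  the linear idempotent on M_d whose range is the sum of the generalized eigenspaces
  for |\<lambda>| = 1 and whose kernel is the sum of the other generalized eigenspaces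
  (normalised to 0 outside M_d so that it is unique).\<close>
definition peripheral_projection :: "nat \<Rightarrow> (complex mat \<Rightarrow> complex mat) \<Rightarrow> complex mat \<Rightarrow> complex mat" where
  "peripheral_projection d T = (THE P. lin_map d P \<and>
     (\<forall>X. X \<notin> carrier_mat d d \<longrightarrow> P X = 0\<^sub>m d d) \<and>
     (\<forall>X \<in> carrier_mat d d. P (P X) = P X) \<and>
     P ` carrier_mat d d = mat_span d (\<Union>c\<in>{c. cmod c = 1}. gen_eigenspace d T c) \<and>
     {X \<in> carrier_mat d d. P X = 0\<^sub>m d d} = mat_span d (\<Union>c\<in>{c. cmod c \<noteq> 1}. gen_eigenspace d T c))"

definition tensor_subspace :: "nat \<Rightarrow> nat \<Rightarrow> complex mat set \<Rightarrow> complex mat set \<Rightarrow> complex mat set" where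
  "tensor_subspace d d' U V = mat_span (d * d') {mat_kron A B | A B. A \<in> U \<and> B \<in> V}"

end

theory Submission
  imports Defs "Jordan_Normal_Form.Schur_Decomposition" "HOL-Computational_Algebra.Field_as_Ring"
begin


section \<open>Finite sums of matrices, subspaces, spans\<close>

definition msum :: "nat \<Rightarrow> ('i \<Rightarrow> complex mat) \<Rightarrow> 'i set \<Rightarrow> complex mat" where
  "msum n f I = mat n n (\<lambda>(p, q). \<Sum>i\<in>I. f i $$ (p, q))"

lemma msum_carrier[simp]: "msum n f I \<in> carrier_mat n n"
  unfolding msum_def by auto

lemma msum_dims[simp]: "dim_row (msum n f I) = n" "dim_col (msum n f I) = n"
  unfolding msum_def by auto

lemma msum_index: "p < n \<Longrightarrow> q < n \<Longrightarrow> msum n f I $$ (p, q) = (\<Sum>i\<in>I. f i $$ (p, q))"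
  unfolding msum_def by auto

lemma msum_empty: "msum n f {} = 0\<^sub>m n n"
  by (rule eq_matI) (auto simp: msum_index)

lemma msum_infinite: "infinite I \<Longrightarrow> msum n f I = 0\<^sub>m n n"
  by (rule eq_matI) (auto simp: msum_index)

lemma msum_insert: assumes "finite I" "x \<notin> I" "f x \<in> carrier_mat n n"
  shows "msum n f (insert x I) = f x + msum n f I"
  by (rule eq_matI) (use assms in \<open>auto simp: msum_index\<close>)

lemma msum_cong: "(\<And>i. i \<in> I \<Longrightarrow> f i = g i) \<Longrightarrow> msum n f I = msum n g I"
  unfolding msum_def by (auto intro!: cong_mat sum.cong)

definition subsp :: "nat \<Rightarrow> complex mat set \<Rightarrow> bool" where
  "subsp n W \<longleftrightarrow> W \<subseteq> carrier_mat n n \<and> 0\<^sub>m n n \<in> W \<and>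
     (\<forall>X\<in>W. \<forall>Y\<in>W. X + Y \<in> W) \<and> (\<forall>X\<in>W. \<forall>c. c \<cdot>\<^sub>m X \<in> W)"

lemma subspD: assumes "subsp n W"
  shows "W \<subseteq> carrier_mat n n" "0\<^sub>m n n \<in> W" "X \<in> W \<Longrightarrow> Y \<in> W \<Longrightarrow> X + Y \<in> W"
    "X \<in> W \<Longrightarrow> c \<cdot>\<^sub>m X \<in> W"
  using assms unfolding subsp_def by auto

lemma subsp_carrier: "subsp n W \<Longrightarrow> X \<in> W \<Longrightarrow> X \<in> carrier_mat n n"
  using subspD(1) by blast

lemma subsp_minus: assumes W: "subsp n W" and X: "X \<in> W" and Y: "Y \<in> W"
  shows "X - Y \<in> W"
proof -
  have XC: "X \<in> carrier_mat n n" and YC: "Y \<in> carrier_mat n n" using W X Y subsp_carrier by auto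
  have "X - Y = X + (-1) \<cdot>\<^sub>m Y"
    by (rule eq_matI) (use XC YC in auto)
  thus ?thesis using subspD[OF W] X Y by auto
qed

lemma subsp_msum: assumes W: "subsp n W" and f: "\<And>i. i \<in> I \<Longrightarrow> f i \<in> W"
  shows "msum n f I \<in> W"
proof (cases "finite I")
  case False thus ?thesis using msum_infinite[of I n f] subspD(2)[OF W] by simp
next
  case True
  from True f show ?thesis
  proof (induction I rule: finite_induct)
    case empty show ?case using subspD(2)[OF W] by (simp add: msum_empty)
  next
    case (insert x F)
    have "f x \<in> carrier_mat n n" using insert subsp_carrier[OF W] by auto
    hence "msum n f (insert x F) = f x + msum n f F" using msum_insert insert by auto
    thus ?case using insert subspD(3)[OF W] by auto
  qed
qed

lemma subsp_zero: "subsp n {0\<^sub>m n n}"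
  unfolding subsp_def by auto

lemma subsp_Int: "subsp n U \<Longrightarrow> subsp n V \<Longrightarrow> subsp n (U \<inter> V)"
  unfolding subsp_def by auto

lemma sum_lessThan_add_split:
  "(\<Sum>i<k1+k2. g i) = (\<Sum>i<k1. g i) + (\<Sum>i<k2. g (i + k1)) " for g :: "nat \<Rightarrow> complex"
  by (induction k2) (auto simp: add.commute add.left_commute)

lemma span_in: "X \<in> A \<Longrightarrow> X \<in> carrier_mat n n \<Longrightarrow> X \<in> mat_span n A"
  unfolding mat_span_def
  by (auto intro!: exI[of _ "1::nat"] exI[of _ "\<lambda>_. 1"] exI[of _ "\<lambda>_. X"])

lemma subsp_span: "subsp n (mat_span n A)"
  unfolding subsp_def
proof (intro conjI ballI allI)
  show "mat_span n A \<subseteq> carrier_mat n n" unfolding mat_span_def by auto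
  show "0\<^sub>m n n \<in> mat_span n A" unfolding mat_span_def
    by (auto intro!: exI[of _ "0::nat"])
next
  fix X c assume "X \<in> mat_span n A"
  then obtain k :: nat and a v where X: "X \<in> carrier_mat n n" "\<forall>i<k. v i \<in> A"
    "\<forall>p<n. \<forall>q<n. X $$ (p, q) = (\<Sum>i<k. a i * v i $$ (p, q))"
    unfolding mat_span_def by blast
  show "c \<cdot>\<^sub>m X \<in> mat_span n A" unfolding mat_span_def
    using X by (auto intro!: exI[of _ k] exI[of _ "\<lambda>i. c * a i"] exI[of _ v]
        simp: sum_distrib_left mult.assoc)
next
  fix X Y assume "X \<in> mat_span n A" "Y \<in> mat_span n A"
  then obtain k1 k2 :: nat and a1 v1 a2 v2 where X: "X \<in> carrier_mat n n" "\<forall>i<k1. v1 i \<in> A"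
    "\<forall>p<n. \<forall>q<n. X $$ (p, q) = (\<Sum>i<k1. a1 i * v1 i $$ (p, q))"
    and Y: "Y \<in> carrier_mat n n" "\<forall>i<k2. v2 i \<in> A"
    "\<forall>p<n. \<forall>q<n. Y $$ (p, q) = (\<Sum>i<k2. a2 i * v2 i $$ (p, q))"
    unfolding mat_span_def by blast
  define v where "v i = (if i < k1 then v1 i else v2 (i - k1))" for i
  define a where "a i = (if i < k1 then a1 i else a2 (i - k1))" for i
  have "X + Y \<in> carrier_mat n n" using X Y by auto
  moreover have "\<forall>i<k1+k2. v i \<in> A" using X Y unfolding v_def by auto
  moreover have "\<forall>p<n. \<forall>q<n. (X + Y) $$ (p, q) = (\<Sum>i<k1+k2. a i * v i $$ (p, q))"
  proof (intro allI impI)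
    fix p q assume pq: "p < n" "q < n"
    have "(\<Sum>i<k1+k2. a i * v i $$ (p, q)) = (\<Sum>i<k1. a i * v i $$ (p, q)) + (\<Sum>i<k2. a (i+k1) * v (i+k1) $$ (p, q))"
      by (rule sum_lessThan_add_split)
    also have "(\<Sum>i<k1. a i * v i $$ (p, q)) = (\<Sum>i<k1. a1 i * v1 i $$ (p, q))"
      unfolding a_def v_def by (rule sum.cong) auto
    also have "(\<Sum>i<k2. a (i+k1) * v (i+k1) $$ (p, q)) = (\<Sum>i<k2. a2 i * v2 i $$ (p, q))"
      unfolding a_def v_def by (rule sum.cong) auto
    finally show "(X + Y) $$ (p, q) = (\<Sum>i<k1+k2. a i * v i $$ (p, q))"
      using X Y pq by auto
  qed
  ultimately show "X + Y \<in> mat_span n A" unfolding mat_span_def by blast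
qed

lemma span_sub: assumes W: "subsp n W" and AW: "A \<subseteq> W" shows "mat_span n A \<subseteq> W"
proof
  fix X assume "X \<in> mat_span n A"
  then obtain k :: nat and a v where X: "X \<in> carrier_mat n n" "\<forall>i<k. v i \<in> A"
    "\<forall>p<n. \<forall>q<n. X $$ (p, q) = (\<Sum>i<k. a i * v i $$ (p, q))"
    unfolding mat_span_def by blast
  have vC: "\<And>i. i < k \<Longrightarrow> v i \<in> carrier_mat n n" using X(2) AW subsp_carrier[OF W] by auto
  have "X = msum n (\<lambda>i. a i \<cdot>\<^sub>m v i) {..<k}"
  proof (rule eq_matI)
    fix p q assume "p < dim_row (msum n (\<lambda>i. a i \<cdot>\<^sub>m v i) {..<k})" "q < dim_col (msum n (\<lambda>i. a i \<cdot>\<^sub>m v i) {..<k})"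
    hence pq: "p < n" "q < n" by auto
    show "X $$ (p, q) = msum n (\<lambda>i. a i \<cdot>\<^sub>m v i) {..<k} $$ (p, q)"
      unfolding msum_index[OF pq] X(3)[rule_format, OF pq]
    proof (rule sum.cong[OF refl])
      fix i assume "i \<in> {..<k}"
      hence "v i \<in> carrier_mat n n" using vC by auto
      thus "a i * v i $$ (p, q) = (a i \<cdot>\<^sub>m v i) $$ (p, q)" using pq by auto
    qed
  qed (use X in auto)
  also have "\<dots> \<in> W" by (rule subsp_msum[OF W]) (use X(2) AW subspD(4)[OF W] in auto)
  finally show "X \<in> W" .
qed

lemma span_mono_gen: "A \<subseteq> mat_span n B \<Longrightarrow> mat_span n A \<subseteq> mat_span n B"
  by (rule span_sub[OF subsp_span])

section \<open>Linear maps\<close>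

lemma lin_mapD: assumes "lin_map n L"
  shows "X \<in> carrier_mat n n \<Longrightarrow> L X \<in> carrier_mat n n"
   "X \<in> carrier_mat n n \<Longrightarrow> Y \<in> carrier_mat n n \<Longrightarrow> L (X + Y) = L X + L Y"
   "X \<in> carrier_mat n n \<Longrightarrow> L (c \<cdot>\<^sub>m X) = c \<cdot>\<^sub>m L X"
  using assms unfolding lin_map_def by auto

lemma lin_zero: assumes L: "lin_map n L" shows "L (0\<^sub>m n n) = 0\<^sub>m n n"
proof -
  have "0\<^sub>m n n = (0::complex) \<cdot>\<^sub>m 0\<^sub>m n n" by simp
  hence "L (0\<^sub>m n n) = (0::complex) \<cdot>\<^sub>m L (0\<^sub>m n n)" using lin_mapD(3)[OF L, of "0\<^sub>m n n" 0] by simp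
  also have "\<dots> = 0\<^sub>m n n" using lin_mapD(1)[OF L, of "0\<^sub>m n n"] by (intro eq_matI) auto
  finally show ?thesis .
qed

lemma lin_minus: assumes L: "lin_map n L" and X: "X \<in> carrier_mat n n" and Y: "Y \<in> carrier_mat n n"
  shows "L (X - Y) = L X - L Y"
proof -
  have e: "X - Y = X + (-1) \<cdot>\<^sub>m Y" by (rule eq_matI) (use X Y in auto)
  have "L (X - Y) = L X + (-1) \<cdot>\<^sub>m L Y" unfolding e using lin_mapD[OF L] X Y by auto
  also have "\<dots> = L X - L Y" using lin_mapD(1)[OF L] X Y by (intro eq_matI) auto
  finally show ?thesis .
qed

lemma lin_msum: assumes L: "lin_map n L" and f: "\<And>i. i \<in> I \<Longrightarrow> f i \<in> carrier_mat n n"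
  shows "L (msum n f I) = msum n (\<lambda>i. L (f i)) I"
proof (cases "finite I")
  case False thus ?thesis using msum_infinite[of I n f] msum_infinite[of I n "\<lambda>i. L (f i)"] lin_zero[OF L] by simp
next
  case True
  from True f show ?thesis
  proof (induction I rule: finite_induct)
    case empty show ?case using lin_zero[OF L] by (simp add: msum_empty)
  next
    case (insert x F)
    have "f x \<in> carrier_mat n n" using insert.prems by auto
    hence "msum n f (insert x F) = f x + msum n f F" using msum_insert[OF insert.hyps(1,2)] by auto
    hence "L (msum n f (insert x F)) = L (f x) + L (msum n f F)"
      using lin_mapD(2)[OF L] insert by auto
    also have "\<dots> = msum n (\<lambda>i. L (f i)) (insert x F)"
      using insert lin_mapD(1)[OF L] by (subst msum_insert) auto
    finally show ?case .
  qed
qed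

lemma mat_unit_carrier[simp]: "mat_unit n i j \<in> carrier_mat n n"
  unfolding mat_unit_def by auto

lemma mat_unit_dims[simp]: "dim_row (mat_unit n i j) = n" "dim_col (mat_unit n i j) = n"
  unfolding mat_unit_def by auto

lemma mat_unit_index: "p < n \<Longrightarrow> q < n \<Longrightarrow> mat_unit n i j $$ (p, q) = (if p = i \<and> q = j then 1 else 0)"
  unfolding mat_unit_def by auto

lemma mat_expand: assumes X: "X \<in> carrier_mat n n"
  shows "X = msum n (\<lambda>(i,j). X $$ (i,j) \<cdot>\<^sub>m mat_unit n i j) ({..<n} \<times> {..<n})"
proof (rule eq_matI)
  fix p q assume pq: "p < dim_row (msum n (\<lambda>(i,j). X $$ (i,j) \<cdot>\<^sub>m mat_unit n i j) ({..<n} \<times> {..<n}))"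
      "q < dim_col (msum n (\<lambda>(i,j). X $$ (i,j) \<cdot>\<^sub>m mat_unit n i j) ({..<n} \<times> {..<n}))"
  hence pq: "p < n" "q < n" by auto
  have "msum n (\<lambda>(i,j). X $$ (i,j) \<cdot>\<^sub>m mat_unit n i j) ({..<n} \<times> {..<n}) $$ (p, q)
     = (\<Sum>ij\<in>{..<n} \<times> {..<n}. (if ij = (p,q) then X $$ (p,q) else 0))"
    unfolding msum_index[OF pq]
  proof (intro sum.cong refl)
    fix ij assume "ij \<in> {..<n} \<times> {..<n}"
    obtain i j where ij: "ij = (i,j)" by force
    show "(\<lambda>(i,j). X $$ (i,j) \<cdot>\<^sub>m mat_unit n i j) ij $$ (p, q) = (if ij = (p,q) then X $$ (p,q) else 0)"
      using pq unfolding ij by (auto simp: mat_unit_index)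
  qed
  also have "\<dots> = X $$ (p,q)" using pq by simp
  finally show "X $$ (p, q) = msum n (\<lambda>(i,j). X $$ (i,j) \<cdot>\<^sub>m mat_unit n i j) ({..<n} \<times> {..<n}) $$ (p, q)"
    by simp
qed (use X in auto)

lemma lin_expand: assumes L: "lin_map n L" and X: "X \<in> carrier_mat n n" and pq: "p < n" "q < n"
  shows "L X $$ (p, q) = (\<Sum>i<n. \<Sum>j<n. X $$ (i, j) * L (mat_unit n i j) $$ (p, q))"
proof -
  have "L X = L (msum n (\<lambda>(i,j). X $$ (i,j) \<cdot>\<^sub>m mat_unit n i j) ({..<n} \<times> {..<n}))"
    using mat_expand[OF X] by simp
  also have "\<dots> = msum n (\<lambda>ij. L ((\<lambda>(i,j). X $$ (i,j) \<cdot>\<^sub>m mat_unit n i j) ij)) ({..<n} \<times> {..<n})"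
    by (rule lin_msum[OF L]) auto
  finally have "L X $$ (p, q) = (\<Sum>ij\<in>{..<n} \<times> {..<n}. L ((\<lambda>(i,j). X $$ (i,j) \<cdot>\<^sub>m mat_unit n i j) ij) $$ (p,q))"
    using pq by (simp add: msum_index)
  also have "\<dots> = (\<Sum>ij\<in>{..<n} \<times> {..<n}. (\<lambda>(i,j). X $$ (i, j) * L (mat_unit n i j) $$ (p, q)) ij)"
  proof (intro sum.cong refl)
    fix ij assume "ij \<in> {..<n} \<times> {..<n}"
    obtain i j where ij: "ij = (i,j)" by force
    have "L (mat_unit n i j) \<in> carrier_mat n n" using lin_mapD(1)[OF L] by simp
    thus "L ((\<lambda>(i,j). X $$ (i,j) \<cdot>\<^sub>m mat_unit n i j) ij) $$ (p,q) = (\<lambda>(i,j). X $$ (i, j) * L (mat_unit n i j) $$ (p, q)) ij"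
      using pq lin_mapD(3)[OF L] unfolding ij by auto
  qed
  also have "\<dots> = (\<Sum>i<n. \<Sum>j<n. X $$ (i, j) * L (mat_unit n i j) $$ (p, q))"
    by (subst sum.cartesian_product[symmetric]) simp
  finally show ?thesis .
qed

lemma lin_funpow: assumes L: "lin_map n L" shows "lin_map n (L ^^ k)"
proof (induction k)
  case 0 thus ?case unfolding lin_map_def by auto
next
  case (Suc k)
  thus ?case using lin_mapD[OF L] unfolding lin_map_def by auto
qed

lemma lin_ext: assumes L: "lin_map n L" and M: "lin_map n M"
  and eq: "\<And>i j. i < n \<Longrightarrow> j < n \<Longrightarrow> L (mat_unit n i j) = M (mat_unit n i j)"
  and X: "X \<in> carrier_mat n n"
  shows "L X = M X"
  by (rule eq_matI) (use lin_mapD(1)[OF L X] lin_mapD(1)[OF M X] in \<open>auto simp: lin_expand[OF L X] lin_expand[OF M X] eq\<close>)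

lemma subsp_kernel: assumes L: "lin_map n L" shows "subsp n {X \<in> carrier_mat n n. L X = 0\<^sub>m n n}"
  unfolding subsp_def using lin_mapD[OF L] lin_zero[OF L] by auto

lemma subsp_fix: assumes L: "lin_map n L" shows "subsp n {X \<in> carrier_mat n n. L X = X}"
  unfolding subsp_def using lin_mapD[OF L] lin_zero[OF L] by auto


section \<open>Polynomials evaluated at a linear map\<close>

definition pev :: "nat \<Rightarrow> (complex mat \<Rightarrow> complex mat) \<Rightarrow> complex poly \<Rightarrow> complex mat \<Rightarrow> complex mat" where
  "pev n L p X = foldr (\<lambda>a Y. a \<cdot>\<^sub>m X + L Y) (coeffs p) (0\<^sub>m n n)"

context
  fixes n L assumes L: "lin_map n L"
begin

lemma pev_carrier_aux: "X \<in> carrier_mat n n \<Longrightarrow> foldr (\<lambda>a Y. a \<cdot>\<^sub>m X + L Y) cs (0\<^sub>m n n) \<in> carrier_mat n n"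
  by (induction cs) (auto simp: lin_mapD(1)[OF L])

lemma pev_carrier[simp]: "X \<in> carrier_mat n n \<Longrightarrow> pev n L p X \<in> carrier_mat n n"
  unfolding pev_def by (rule pev_carrier_aux)

lemma pev_0[simp]: "pev n L 0 X = 0\<^sub>m n n"
  unfolding pev_def by simp

lemma pev_pCons: assumes X: "X \<in> carrier_mat n n"
  shows "pev n L (pCons a p) X = a \<cdot>\<^sub>m X + L (pev n L p X)"
proof (cases "a = 0 \<and> p = 0")
  case True
  have "L (0\<^sub>m n n) = 0\<^sub>m n n" by (rule lin_zero[OF L])
  thus ?thesis using True X by (auto intro!: eq_matI)
next
  case False
  hence "coeffs (pCons a p) = a # coeffs p" by (auto simp: cCons_def)
  thus ?thesis unfolding pev_def by simp
qed

lemma pev_add: assumes X: "X \<in> carrier_mat n n"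
  shows "pev n L (p + q) X = pev n L p X + pev n L q X"
proof (induction p arbitrary: q rule: pCons_induct)
  case 0 thus ?case using X by (auto intro!: eq_matI)
next
  case (pCons a p)
  obtain b q' where q: "q = pCons b q'" by (cases q) auto
  have "pev n L (pCons a p + q) X = (a + b) \<cdot>\<^sub>m X + L (pev n L p X + pev n L q' X)"
    unfolding q by (simp add: pev_pCons[OF X] pCons)
  also have "\<dots> = (a + b) \<cdot>\<^sub>m X + (L (pev n L p X) + L (pev n L q' X))"
    using lin_mapD(2)[OF L] X by simp
  also have "\<dots> = pev n L (pCons a p) X + pev n L q X"
    unfolding q pev_pCons[OF X] using carrier_matD[OF X] carrier_matD[OF lin_mapD(1)[OF L, OF pev_carrier[OF X]]]
    by (intro eq_matI) (auto simp: algebra_simps)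
  finally show ?case .
qed

lemma pev_smult: assumes X: "X \<in> carrier_mat n n"
  shows "pev n L (smult c p) X = c \<cdot>\<^sub>m pev n L p X"
proof (induction p rule: pCons_induct)
  case 0 thus ?case by simp
next
  case (pCons a p)
  have "pev n L (smult c (pCons a p)) X = (c * a) \<cdot>\<^sub>m X + L (c \<cdot>\<^sub>m pev n L p X)"
    by (simp add: pev_pCons[OF X] pCons)
  also have "\<dots> = (c * a) \<cdot>\<^sub>m X + c \<cdot>\<^sub>m L (pev n L p X)" using lin_mapD(3)[OF L] X by simp
  also have "\<dots> = c \<cdot>\<^sub>m pev n L (pCons a p) X"
    unfolding pev_pCons[OF X] using carrier_matD[OF X] carrier_matD[OF lin_mapD(1)[OF L, OF pev_carrier[OF X]]]
    by (intro eq_matI) (auto simp: algebra_simps)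
  finally show ?case .
qed

lemma pev_lin_add: assumes X: "X \<in> carrier_mat n n" and Y: "Y \<in> carrier_mat n n"
  shows "pev n L p (X + Y) = pev n L p X + pev n L p Y"
proof (induction p rule: pCons_induct)
  case 0 thus ?case by (auto intro!: eq_matI)
next
  case (pCons a p)
  have XY: "X + Y \<in> carrier_mat n n" using X Y by simp
  have "pev n L (pCons a p) (X + Y) = a \<cdot>\<^sub>m (X + Y) + (L (pev n L p X) + L (pev n L p Y))"
    unfolding pev_pCons[OF XY] pCons using lin_mapD(2)[OF L] X Y by simp
  also have "\<dots> = pev n L (pCons a p) X + pev n L (pCons a p) Y"
    unfolding pev_pCons[OF X] pev_pCons[OF Y]
    using carrier_matD[OF X] carrier_matD[OF Y] carrier_matD[OF lin_mapD(1)[OF L, OF pev_carrier[OF X]]] carrier_matD[OF lin_mapD(1)[OF L, OF pev_carrier[OF Y]]]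
    by (intro eq_matI) (auto simp: algebra_simps)
  finally show ?case .
qed

lemma pev_lin_smult: assumes X: "X \<in> carrier_mat n n"
  shows "pev n L p (c \<cdot>\<^sub>m X) = c \<cdot>\<^sub>m pev n L p X"
proof (induction p rule: pCons_induct)
  case 0 thus ?case by (auto intro!: eq_matI)
next
  case (pCons a p)
  have cX: "c \<cdot>\<^sub>m X \<in> carrier_mat n n" using X by simp
  have "pev n L (pCons a p) (c \<cdot>\<^sub>m X) = a \<cdot>\<^sub>m (c \<cdot>\<^sub>m X) + c \<cdot>\<^sub>m L (pev n L p X)"
    unfolding pev_pCons[OF cX] pCons using lin_mapD(3)[OF L] X by simp
  also have "\<dots> = c \<cdot>\<^sub>m pev n L (pCons a p) X"
    unfolding pev_pCons[OF X]
    using carrier_matD[OF X] carrier_matD[OF lin_mapD(1)[OF L, OF pev_carrier[OF X]]]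
    by (intro eq_matI) (auto simp: algebra_simps)
  finally show ?case .
qed

lemma pev_lin_map: "lin_map n (pev n L p)"
  unfolding lin_map_def using pev_lin_add pev_lin_smult by auto

lemma pev_mult: assumes X: "X \<in> carrier_mat n n"
  shows "pev n L (p * q) X = pev n L p (pev n L q X)"
proof (induction p rule: pCons_induct)
  case 0 thus ?case by simp
next
  case (pCons a p)
  have qX: "pev n L q X \<in> carrier_mat n n" using X by simp
  have "pev n L (pCons a p * q) X = pev n L (smult a q) X + pev n L (pCons 0 (p * q)) X"
    by (simp add: pev_add[OF X])
  also have "\<dots> = a \<cdot>\<^sub>m pev n L q X + (0 \<cdot>\<^sub>m X + L (pev n L p (pev n L q X)))"
    unfolding pev_smult[OF X] pev_pCons[OF X] pCons ..
  also have "\<dots> = pev n L (pCons a p) (pev n L q X)"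
    unfolding pev_pCons[OF qX] using carrier_matD[OF X] carrier_matD[OF qX] carrier_matD[OF lin_mapD(1)[OF L, OF pev_carrier[OF qX]]]
    by (intro eq_matI) auto
  finally show ?case .
qed

lemma pev_one: assumes X: "X \<in> carrier_mat n n" shows "pev n L 1 X = X"
proof -
  have "pev n L (pCons 1 0) X = X"
    unfolding pev_pCons[OF X] using X lin_zero[OF L] by (auto intro!: eq_matI)
  thus ?thesis by (simp add: one_pCons)
qed

lemma pev_linear_factor: assumes X: "X \<in> carrier_mat n n"
  shows "pev n L [:-c, 1:] X = L X - c \<cdot>\<^sub>m X"
proof -
  have one: "1 \<cdot>\<^sub>m X = X" using X by (intro eq_matI) auto
  have "pev n L [:-c, 1:] X = (-c) \<cdot>\<^sub>m X + L (1 \<cdot>\<^sub>m X + L (0\<^sub>m n n))"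
    using X by (simp add: pev_pCons)
  also have "\<dots> = (-c) \<cdot>\<^sub>m X + L X" using X lin_zero[OF L] one by simp
  also have "\<dots> = L X - c \<cdot>\<^sub>m X"
    using X lin_zero[OF L] lin_mapD(1)[OF L X] by (auto intro!: eq_matI)
  finally show ?thesis .
qed

lemma pev_power: assumes X: "X \<in> carrier_mat n n"
  shows "pev n L ([:-c, 1:] ^ k) X = ((\<lambda>Y. L Y - c \<cdot>\<^sub>m Y) ^^ k) X"
proof (induction k)
  case 0 thus ?case using pev_one[OF X] by simp
next
  case (Suc k)
  have "pev n L ([:-c, 1:] ^ Suc k) X = pev n L [:-c, 1:] (pev n L ([:-c, 1:] ^ k) X)"
    unfolding power_Suc pev_mult[OF X] ..
  also have "\<dots> = L (pev n L ([:-c, 1:] ^ k) X) - c \<cdot>\<^sub>m (pev n L ([:-c, 1:] ^ k) X)"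
    by (rule pev_linear_factor) (use X in simp)
  finally show ?case using Suc by simp
qed

lemma pev_zero_arg: "pev n L p (0\<^sub>m n n) = 0\<^sub>m n n"
  by (rule lin_zero[OF pev_lin_map])

lemma pev_comm: assumes X: "X \<in> carrier_mat n n"
  shows "pev n L p (pev n L q X) = pev n L q (pev n L p X)"
  by (metis X mult.commute pev_mult)

lemma gen_eigenspace_pev: "gen_eigenspace n L c = {X \<in> carrier_mat n n. pev n L ([:-c, 1:] ^ (n * n)) X = 0\<^sub>m n n}"
  unfolding gen_eigenspace_def using pev_power by auto

lemma subsp_gen_eigenspace: "subsp n (gen_eigenspace n L c)"
  unfolding gen_eigenspace_pev by (rule subsp_kernel[OF pev_lin_map])

lemma bezout_poly: fixes p q :: "complex poly" assumes "coprime p q"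
  shows "\<exists>a b. a * p + b * q = 1"
  using bezout_coefficients_fst_snd[of p q] assms by (auto simp: coprime_iff_gcd_eq_1)

lemma ker_coprime: assumes cp: "coprime p q" and X: "X \<in> carrier_mat n n"
  and p: "pev n L p X = 0\<^sub>m n n" and q: "pev n L q X = 0\<^sub>m n n"
  shows "X = 0\<^sub>m n n"
proof -
  obtain a b where ab: "a * p + b * q = 1" using bezout_poly[OF cp] by blast
  have "X = pev n L (a * p + b * q) X" using pev_one[OF X] ab by simp
  also have "\<dots> = 0\<^sub>m n n" using X p q by (simp add: pev_add pev_mult pev_zero_arg)
  finally show ?thesis .
qed

lemma ker_split: assumes cp: "coprime g h" and X: "X \<in> carrier_mat n n"
  and gh: "pev n L (g * h) X = 0\<^sub>m n n"
  shows "\<exists>X1 X2. X1 \<in> carrier_mat n n \<and> X2 \<in> carrier_mat n n \<and> X = X1 + X2 \<and>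
     pev n L g X1 = 0\<^sub>m n n \<and> pev n L h X2 = 0\<^sub>m n n"
proof -
  obtain a b where ab: "a * g + b * h = 1" using bezout_poly[OF cp] by blast
  have "X = pev n L (a * g + b * h) X" using pev_one[OF X] ab by simp
  also have "\<dots> = pev n L (b * h) X + pev n L (a * g) X" using X
    by (simp add: pev_add) (rule comm_add_mat[of _ n n], auto)
  finally have e: "X = pev n L (b * h) X + pev n L (a * g) X" .
  have "pev n L g (pev n L (b * h) X) = pev n L (b * (g * h)) X"
    using X by (simp add: pev_mult[symmetric] ac_simps)
  also have "\<dots> = 0\<^sub>m n n" using X gh by (simp add: pev_mult pev_zero_arg)
  finally have 1: "pev n L g (pev n L (b * h) X) = 0\<^sub>m n n" .
  have "pev n L h (pev n L (a * g) X) = pev n L (a * (g * h)) X"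
    using X by (simp add: pev_mult[symmetric] ac_simps)
  also have "\<dots> = 0\<^sub>m n n" using X gh by (simp add: pev_mult pev_zero_arg)
  finally have 2: "pev n L h (pev n L (a * g) X) = 0\<^sub>m n n" .
  show ?thesis using e 1 2 X by (intro exI[of _ "pev n L (b * h) X"] exI[of _ "pev n L (a * g) X"]) auto
qed

end

lemma coprime_linear_factors: fixes a b :: complex assumes "a \<noteq> b"
  shows "coprime [:-a, 1:] [:-b, 1:]"
proof (rule coprimeI)
  fix c assume ca: "c dvd [:-a, 1:]" and cb: "c dvd [:-b, 1:]"
  have ba: "b - a \<noteq> 0" using assms by simp
  have d: "[:-a, 1:] - [:-b, 1:] = [:b - a:]" by simp
  have "smult (1 / (b - a)) ([:-a, 1:] - [:-b, 1:]) = 1"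
    unfolding d using ba by (simp add: one_pCons)
  moreover have "c dvd smult (1 / (b - a)) ([:-a, 1:] - [:-b, 1:])"
    using ca cb by (intro dvd_smult dvd_diff)
  ultimately show "is_unit c" by simp
qed

lemma coprime_lin_powers: fixes a b :: complex assumes "a \<noteq> b"
  shows "coprime ([:-a, 1:] ^ k) ([:-b, 1:] ^ m)"
  using coprime_linear_factors[OF assms] by simp

lemma coprime_lin_power_prod: fixes a :: complex assumes "a \<notin> C"
  shows "coprime ([:-a, 1:] ^ k) (\<Prod>c\<in>C. [:-c, 1:] ^ m c)"
  by (rule prod_coprime_right) (metis assms coprime_lin_powers)

lemma coprime_prod_prod: fixes C D :: "complex set" assumes "C \<inter> D = {}"
  shows "coprime (\<Prod>c\<in>C. [:-c, 1:] ^ k c) (\<Prod>c\<in>D. [:-c, 1:] ^ m c)"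
  by (rule prod_coprime_left) (metis assms coprime_lin_power_prod disjoint_iff)


lemma msum_zero: "(\<And>i. i \<in> I \<Longrightarrow> g i = 0\<^sub>m n n) \<Longrightarrow> msum n g I = 0\<^sub>m n n"
  by (rule eq_matI) (auto simp: msum_index)

lemma msum_split: "finite I \<Longrightarrow> msum n g I = msum n g {i\<in>I. P i} + msum n g {i\<in>I. \<not> P i}"
proof (rule eq_matI)
  fix p q assume fin: "finite I" and pq: "p < dim_row (msum n g {i \<in> I. P i} + msum n g {i \<in> I. \<not> P i})"
    "q < dim_col (msum n g {i \<in> I. P i} + msum n g {i \<in> I. \<not> P i})"
  hence pq: "p < n" "q < n" by auto
  have "I = {i\<in>I. P i} \<union> {i\<in>I. \<not> P i}" by auto
  hence "(\<Sum>i\<in>I. g i $$ (p, q)) = (\<Sum>i\<in>{i\<in>I. P i} \<union> {i\<in>I. \<not> P i}. g i $$ (p, q))"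
    by simp
  also have "\<dots> = (\<Sum>i\<in>{i\<in>I. P i}. g i $$ (p, q)) + (\<Sum>i\<in>{i\<in>I. \<not> P i}. g i $$ (p, q))"
    by (rule sum.union_disjoint) (use fin in auto)
  finally have "(\<Sum>i\<in>I. g i $$ (p, q)) = (\<Sum>i\<in>{i\<in>I. P i}. g i $$ (p, q)) + (\<Sum>i\<in>{i\<in>I. \<not> P i}. g i $$ (p, q))" .
  thus "msum n g I $$ (p, q) = (msum n g {i \<in> I. P i} + msum n g {i \<in> I. \<not> P i}) $$ (p, q)"
    using pq by (simp add: msum_index)
qed auto

lemma gen_eigenspace_carrier: "gen_eigenspace n L c \<subseteq> carrier_mat n n"
  unfolding gen_eigenspace_def by auto

lemma gen_carrier: "X \<in> gen_eigenspace n L c \<Longrightarrow> X \<in> carrier_mat n n"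
  unfolding gen_eigenspace_def by auto

context fixes n L assumes L: "lin_map n L"
begin

lemma span_decomp: assumes "finite C"
  shows "X \<in> carrier_mat n n \<Longrightarrow> pev n L (\<Prod>c\<in>C. [:-c, 1:] ^ k c) X = 0\<^sub>m n n \<Longrightarrow>
    \<exists>f. (\<forall>c\<in>C. f c \<in> carrier_mat n n \<and> pev n L ([:-c, 1:] ^ k c) (f c) = 0\<^sub>m n n) \<and> X = msum n f C"
  using assms
proof (induction C arbitrary: X rule: finite_induct)
  case empty
  hence "X = 0\<^sub>m n n" using pev_one[OF L] by simp
  thus ?case by (auto simp: msum_empty)
next
  case (insert c F X)
  have cp: "coprime ([:-c, 1:] ^ k c) (\<Prod>c\<in>F. [:-c, 1:] ^ k c)"
    by (rule coprime_lin_power_prod) (use insert in auto)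
  have "pev n L ([:-c, 1:] ^ k c * (\<Prod>c\<in>F. [:-c, 1:] ^ k c)) X = 0\<^sub>m n n"
    using insert by (simp add: prod.insert)
  from ker_split[OF L cp insert(4) this] obtain X1 X2 where X12: "X1 \<in> carrier_mat n n" "X2 \<in> carrier_mat n n"
    "X = X1 + X2" "pev n L ([:-c, 1:] ^ k c) X1 = 0\<^sub>m n n" "pev n L (\<Prod>c\<in>F. [:-c, 1:] ^ k c) X2 = 0\<^sub>m n n"
    by blast
  from insert(3)[OF X12(2) X12(5)] obtain f where f: "\<forall>c\<in>F. f c \<in> carrier_mat n n \<and> pev n L ([:-c, 1:] ^ k c) (f c) = 0\<^sub>m n n"
    "X2 = msum n f F" by blast
  define f' where "f' = f(c := X1)"
  have "msum n f' (insert c F) = f' c + msum n f' F"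
    by (rule msum_insert) (use insert X12 in \<open>auto simp: f'_def\<close>)
  also have "msum n f' F = msum n f F" by (rule msum_cong) (use insert in \<open>auto simp: f'_def\<close>)
  finally have m: "msum n f' (insert c F) = f' c + msum n f F" .
  have fc: "f' c = X1" unfolding f'_def by simp
  have "X = msum n f' (insert c F)" using m fc X12 f(2) by simp
  moreover have "\<forall>c'\<in>insert c F. f' c' \<in> carrier_mat n n \<and> pev n L ([:-c', 1:] ^ k c') (f' c') = 0\<^sub>m n n"
    using f X12 insert by (auto simp: f'_def)
  ultimately show ?case by blast
qed

lemma gen_indep: assumes fin: "finite I" and W: "W \<in> gen_eigenspace n L \<mu>"
  and g: "\<And>i. i \<in> I \<Longrightarrow> g i \<in> gen_eigenspace n L (\<nu> i) \<and> \<nu> i \<noteq> \<mu>"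
  and Wg: "W = msum n g I"
  shows "W = 0\<^sub>m n n"
proof -
  define h where "h = (\<Prod>v\<in>\<nu> ` I. [:-v, 1:] ^ (n * n))"
  have gz: "pev n L h (g i) = 0\<^sub>m n n" if i: "i \<in> I" for i
  proof -
    have "h = (\<Prod>v\<in>\<nu> ` I - {\<nu> i}. [:-v, 1:] ^ (n * n)) * [:-\<nu> i, 1:] ^ (n * n)"
      unfolding h_def using fin i by (subst prod.remove[of _ "\<nu> i"]) (auto simp: mult.commute)
    hence "pev n L h (g i) = pev n L (\<Prod>v\<in>\<nu> ` I - {\<nu> i}. [:-v, 1:] ^ (n * n)) (pev n L ([:-\<nu> i, 1:] ^ (n * n)) (g i))"
      using pev_mult[OF L gen_carrier, OF conjunct1[OF g[OF i]]] by simp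
    also have "pev n L ([:-\<nu> i, 1:] ^ (n * n)) (g i) = 0\<^sub>m n n"
      using g[OF i] unfolding gen_eigenspace_pev[OF L] by auto
    finally show ?thesis by (simp add: pev_zero_arg[OF L])
  qed
  have gC: "\<And>i. i \<in> I \<Longrightarrow> g i \<in> carrier_mat n n" using g gen_carrier by blast
  have "pev n L h W = msum n (\<lambda>i. pev n L h (g i)) I"
    unfolding Wg by (rule lin_msum[OF pev_lin_map[OF L]]) (use gC in auto)
  also have "\<dots> = 0\<^sub>m n n" by (rule msum_zero) (use gz in auto)
  finally have 1: "pev n L h W = 0\<^sub>m n n" .
  have 2: "pev n L ([:-\<mu>, 1:] ^ (n * n)) W = 0\<^sub>m n n" using W unfolding gen_eigenspace_pev[OF L] by auto
  have cp: "coprime ([:-\<mu>, 1:] ^ (n * n)) h"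
    unfolding h_def by (rule coprime_lin_power_prod) (use g in auto)
  show ?thesis by (rule ker_coprime[OF L cp _ 2 1]) (use W gen_carrier in auto)
qed

definition "Rsp = mat_span n (\<Union>c\<in>{c. cmod c = 1}. gen_eigenspace n L c)"
definition "Ksp = mat_span n (\<Union>c\<in>{c. cmod c \<noteq> 1}. gen_eigenspace n L c)"

context fixes Q assumes Q: "lin_map n Q"
  and spn: "\<And>X. X \<in> carrier_mat n n \<Longrightarrow> \<exists>(I :: (complex \<times> complex) set) g \<nu>. finite I \<and>
              (\<forall>i\<in>I. g i \<in> gen_eigenspace n L (\<nu> i)) \<and> X = msum n g I"
  and fix1: "\<And>\<mu> Z. cmod \<mu> = 1 \<Longrightarrow> Z \<in> gen_eigenspace n L \<mu> \<Longrightarrow> Q Z = Z"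
  and kill1: "\<And>\<mu> Z. cmod \<mu> \<noteq> 1 \<Longrightarrow> Z \<in> gen_eigenspace n L \<mu> \<Longrightarrow> Q Z = 0\<^sub>m n n"
begin

lemma fixR: "Z \<in> Rsp \<Longrightarrow> Q Z = Z"
proof -
  have "Rsp \<subseteq> {X \<in> carrier_mat n n. Q X = X}" unfolding Rsp_def
    by (rule span_sub[OF subsp_fix[OF Q]]) (use fix1 gen_carrier in auto)
  thus "Z \<in> Rsp \<Longrightarrow> Q Z = Z" by auto
qed

lemma killK: "Z \<in> Ksp \<Longrightarrow> Q Z = 0\<^sub>m n n"
proof -
  have "Ksp \<subseteq> {X \<in> carrier_mat n n. Q X = 0\<^sub>m n n}" unfolding Ksp_def
    by (rule span_sub[OF subsp_kernel[OF Q]]) (use kill1 gen_carrier in auto)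
  thus "Z \<in> Ksp \<Longrightarrow> Q Z = 0\<^sub>m n n" by auto
qed

lemma RK_decomp: assumes X: "X \<in> carrier_mat n n"
  shows "\<exists>r k. r \<in> Rsp \<and> k \<in> Ksp \<and> X = r + k"
proof -
  obtain I :: "(complex \<times> complex) set" and g \<nu> where I: "finite I" "\<forall>i\<in>I. g i \<in> gen_eigenspace n L (\<nu> i)"
    "X = msum n g I" using spn[OF X] by blast
  have "msum n g {i\<in>I. cmod (\<nu> i) = 1} \<in> Rsp" unfolding Rsp_def
    by (rule subsp_msum[OF subsp_span]) (use I gen_carrier in \<open>auto intro!: span_in\<close>)
  moreover have "msum n g {i\<in>I. \<not> cmod (\<nu> i) = 1} \<in> Ksp" unfolding Ksp_def
    by (rule subsp_msum[OF subsp_span]) (use I gen_carrier in \<open>auto intro!: span_in\<close>)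
  ultimately show ?thesis using msum_split[OF I(1), of n g "\<lambda>i. cmod (\<nu> i) = 1"] I(3)
    by (intro exI[of _ "msum n g {i\<in>I. cmod (\<nu> i) = 1}"] exI[of _ "msum n g {i\<in>I. \<not> cmod (\<nu> i) = 1}"]) auto
qed

lemma RK_carrier: "Rsp \<subseteq> carrier_mat n n" "Ksp \<subseteq> carrier_mat n n"
  unfolding Rsp_def Ksp_def mat_span_def by auto

lemma Q_decomp: assumes X: "X \<in> carrier_mat n n" and r: "r \<in> Rsp" and k: "k \<in> Ksp" and e: "X = r + k"
  shows "Q X = r"
proof -
  have "Q X = Q r + Q k" using e lin_mapD(2)[OF Q] r k RK_carrier by auto
  also have "\<dots> = r + 0\<^sub>m n n" using fixR[OF r] killK[OF k] by simp
  also have "\<dots> = r" using r RK_carrier by auto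
  finally show ?thesis .
qed

lemma Q_range: "Q ` carrier_mat n n = Rsp"
proof
  show "Q ` carrier_mat n n \<subseteq> Rsp"
  proof
    fix Y assume "Y \<in> Q ` carrier_mat n n"
    then obtain X where X: "X \<in> carrier_mat n n" "Y = Q X" by auto
    obtain r k where rk: "r \<in> Rsp" "k \<in> Ksp" "X = r + k" using RK_decomp[OF X(1)] by blast
    show "Y \<in> Rsp" using Q_decomp[OF X(1) rk] X rk by simp
  qed
  show "Rsp \<subseteq> Q ` carrier_mat n n"
  proof
    fix Z assume "Z \<in> Rsp"
    thus "Z \<in> Q ` carrier_mat n n" using fixR RK_carrier by (metis image_eqI subsetD)
  qed
qed

lemma Q_idem: "X \<in> carrier_mat n n \<Longrightarrow> Q (Q X) = Q X"
  using Q_range fixR by blast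

lemma Q_kernel: "{X \<in> carrier_mat n n. Q X = 0\<^sub>m n n} = Ksp"
proof
  show "Ksp \<subseteq> {X \<in> carrier_mat n n. Q X = 0\<^sub>m n n}" using killK RK_carrier by auto
  show "{X \<in> carrier_mat n n. Q X = 0\<^sub>m n n} \<subseteq> Ksp"
  proof
    fix X assume "X \<in> {X \<in> carrier_mat n n. Q X = 0\<^sub>m n n}"
    hence X: "X \<in> carrier_mat n n" "Q X = 0\<^sub>m n n" by auto
    obtain r k where rk: "r \<in> Rsp" "k \<in> Ksp" "X = r + k" using RK_decomp[OF X(1)] by blast
    have "r = 0\<^sub>m n n" using Q_decomp[OF X(1) rk] X by simp
    hence "X = k" using rk RK_carrier by auto
    thus "X \<in> Ksp" using rk by simp
  qed
qed

lemma pp_eq: assumes X: "X \<in> carrier_mat n n" shows "peripheral_projection n L X = Q X"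
proof -
  define P0 where "P0 X = (if X \<in> carrier_mat n n then Q X else 0\<^sub>m n n)" for X
  let ?C = "\<lambda>P. lin_map n P \<and>
     (\<forall>X. X \<notin> carrier_mat n n \<longrightarrow> P X = 0\<^sub>m n n) \<and>
     (\<forall>X \<in> carrier_mat n n. P (P X) = P X) \<and>
     P ` carrier_mat n n = mat_span n (\<Union>c\<in>{c. cmod c = 1}. gen_eigenspace n L c) \<and>
     {X \<in> carrier_mat n n. P X = 0\<^sub>m n n} = mat_span n (\<Union>c\<in>{c. cmod c \<noteq> 1}. gen_eigenspace n L c)"
  have C0: "?C P0"
  proof (intro conjI allI impI ballI)
    show "lin_map n P0" using Q unfolding lin_map_def P0_def by auto
    show "\<And>X. X \<notin> carrier_mat n n \<Longrightarrow> P0 X = 0\<^sub>m n n" unfolding P0_def by auto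
    show "\<And>X. X \<in> carrier_mat n n \<Longrightarrow> P0 (P0 X) = P0 X" unfolding P0_def
      using Q_idem lin_mapD(1)[OF Q] by auto
    have "P0 ` carrier_mat n n = Q ` carrier_mat n n" unfolding P0_def by auto
    thus "P0 ` carrier_mat n n = mat_span n (\<Union>c\<in>{c. cmod c = 1}. gen_eigenspace n L c)"
      using Q_range unfolding Rsp_def by simp
    have "{X \<in> carrier_mat n n. P0 X = 0\<^sub>m n n} = {X \<in> carrier_mat n n. Q X = 0\<^sub>m n n}"
      unfolding P0_def by auto
    thus "{X \<in> carrier_mat n n. P0 X = 0\<^sub>m n n} = mat_span n (\<Union>c\<in>{c. cmod c \<noteq> 1}. gen_eigenspace n L c)"
      using Q_kernel unfolding Ksp_def by simp
  qed
  have uniq: "P = P0" if CP: "?C P" for P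
  proof
    fix Y show "P Y = P0 Y"
    proof (cases "Y \<in> carrier_mat n n")
      case False thus ?thesis using CP unfolding P0_def by auto
    next
      case True
      obtain r k where rk: "r \<in> Rsp" "k \<in> Ksp" "Y = r + k" using RK_decomp[OF True] by blast
      from CP have PR: "P ` carrier_mat n n = Rsp" and PK: "{X \<in> carrier_mat n n. P X = 0\<^sub>m n n} = Ksp"
        and Pl: "lin_map n P" and Pi: "\<forall>X \<in> carrier_mat n n. P (P X) = P X"
        unfolding Rsp_def Ksp_def by auto
      obtain Y' where Y': "Y' \<in> carrier_mat n n" "r = P Y'" using rk(1) PR by (metis imageE)
      have "P r = r" using Pi Y' by simp
      moreover have "P k = 0\<^sub>m n n" using rk(2) PK by blast
      moreover have rC: "r \<in> carrier_mat n n" and kC: "k \<in> carrier_mat n n" using rk RK_carrier by auto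
      ultimately have "P Y = r + 0\<^sub>m n n" using rk lin_mapD(2)[OF Pl rC kC] by auto
      also have "\<dots> = r" using rk RK_carrier by auto
      also have "r = Q Y" using Q_decomp[OF True rk] by simp
      finally show ?thesis using True unfolding P0_def by simp
    qed
  qed
  have "peripheral_projection n L = P0"
    unfolding peripheral_projection_def
    by (rule the_equality[where P = ?C, OF C0]) (rule uniq, assumption)
  thus ?thesis using X unfolding P0_def by simp
qed

end
end


lemma sum_div_mod_aux: "(\<Sum>s<m*n. f s) = (\<Sum>i<m. \<Sum>j<n. f (i*n+j))" for f :: "nat \<Rightarrow> complex"
proof (induction m)
  case 0 thus ?case by simp
next
  case (Suc m)
  have "(\<Sum>s<Suc m*n. f s) = (\<Sum>s<m*n + n. f s)" by (simp add: add.commute)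
  also have "\<dots> = (\<Sum>s<m*n. f s) + (\<Sum>j<n. f (j + m*n))" by (rule sum_lessThan_add_split)
  finally show ?case using Suc by (simp add: add.commute)
qed

lemma sum_div_mod: "(\<Sum>s<n*n. g (s div n) (s mod n)) = (\<Sum>i<n. \<Sum>j<n. g i j)" for g :: "nat \<Rightarrow> nat \<Rightarrow> complex"
  unfolding sum_div_mod_aux by (intro sum.cong refl) auto

definition vec_of :: "nat \<Rightarrow> complex mat \<Rightarrow> complex vec" where
  "vec_of n X = vec (n*n) (\<lambda>s. X $$ (s div n, s mod n))"

lemma vec_of_carrier[simp]: "vec_of n X \<in> carrier_vec (n*n)"
  unfolding vec_of_def by simp

lemma div_mod_lt: fixes s n :: nat assumes s: "s < n * n" shows "s div n < n \<and> s mod n < n"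
proof
  have n: "n > 0" using s by (cases n) auto
  thus "s div n < n" using s by (simp add: div_less_iff_less_mult)
  show "s mod n < n" using n by simp
qed

lemma ij_lt: fixes i j n :: nat assumes "i < n" "j < n" shows "i * n + j < n * n"
proof -
  have "i * n + j < i * n + n" using assms by simp
  also have "\<dots> = Suc i * n" by simp
  also have "\<dots> \<le> n * n" using assms(1) by (intro mult_le_mono1) simp
  finally show ?thesis .
qed

lemma vec_of_inj: assumes X: "X \<in> carrier_mat n n" and v: "vec_of n X = 0\<^sub>v (n*n)"
  shows "X = 0\<^sub>m n n"
proof (rule eq_matI)
  fix i j assume "i < dim_row (0\<^sub>m n n :: complex mat)" "j < dim_col (0\<^sub>m n n :: complex mat)"
  hence ij: "i < n" "j < n" by auto
  have "vec_of n X $ (i * n + j) = 0" using v ij_lt[OF ij] by simp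
  thus "X $$ (i, j) = 0\<^sub>m n n $$ (i, j)" using ij ij_lt[OF ij] unfolding vec_of_def by simp
qed (use X in auto)

definition mat_of_lin :: "nat \<Rightarrow> (complex mat \<Rightarrow> complex mat) \<Rightarrow> complex mat" where
  "mat_of_lin n L = mat (n*n) (n*n) (\<lambda>(r, s). L (mat_unit n (s div n) (s mod n)) $$ (r div n, r mod n))"

lemma mat_of_lin_carrier: "mat_of_lin n L \<in> carrier_mat (n*n) (n*n)"
  unfolding mat_of_lin_def by simp

lemma mat_of_lin_vec: assumes L: "lin_map n L" and X: "X \<in> carrier_mat n n"
  shows "vec_of n (L X) = mat_of_lin n L *\<^sub>v vec_of n X"
proof (rule eq_vecI)
  fix r assume "r < dim_vec (mat_of_lin n L *\<^sub>v vec_of n X)"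
  hence r: "r < n * n" unfolding mat_of_lin_def by simp
  have rr: "r div n < n" "r mod n < n" using div_mod_lt[OF r] by auto
  have "(mat_of_lin n L *\<^sub>v vec_of n X) $ r = (\<Sum>s<n*n. L (mat_unit n (s div n) (s mod n)) $$ (r div n, r mod n) * X $$ (s div n, s mod n))"
    using r unfolding mat_of_lin_def vec_of_def
    by (simp add: scalar_prod_def atLeast0LessThan)
  also have "\<dots> = (\<Sum>i<n. \<Sum>j<n. L (mat_unit n i j) $$ (r div n, r mod n) * X $$ (i, j))"
    by (rule sum_div_mod)
  also have "\<dots> = L X $$ (r div n, r mod n)"
    by (subst lin_expand[OF L X rr]) (simp add: mult.commute)
  finally show "vec_of n (L X) $ r = (mat_of_lin n L *\<^sub>v vec_of n X) $ r"
    using r unfolding vec_of_def by simp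
qed (simp add: mat_of_lin_def)

definition Fv :: "complex mat \<Rightarrow> complex \<Rightarrow> complex vec \<Rightarrow> complex vec" where
  "Fv M e w = M *\<^sub>v w - e \<cdot>\<^sub>v w"

lemma Fv_carrier: "M \<in> carrier_mat N N \<Longrightarrow> w \<in> carrier_vec N \<Longrightarrow> Fv M e w \<in> carrier_vec N"
  unfolding Fv_def by auto

lemma foldr_Fv_carrier: "M \<in> carrier_mat N N \<Longrightarrow> w \<in> carrier_vec N \<Longrightarrow> foldr (Fv M) es w \<in> carrier_vec N"
  by (induction es) (auto intro: Fv_carrier)

lemma upper_tri_CH: assumes B: "B \<in> carrier_mat N N" and ut: "upper_triangular B"
  shows "k \<le> N \<Longrightarrow> v \<in> carrier_vec N \<Longrightarrow> (\<forall>j. k \<le> j \<longrightarrow> j < N \<longrightarrow> v $ j = 0) \<Longrightarrow>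
     foldr (Fv B) (map (\<lambda>i. B $$ (i, i)) [0..<k]) v = 0\<^sub>v N"
proof (induction k arbitrary: v)
  case 0
  thus ?case by (intro eq_vecI) auto
next
  case (Suc k)
  define w where "w = Fv B (B $$ (k, k)) v"
  have wC: "w \<in> carrier_vec N" unfolding w_def using Fv_carrier[OF B Suc(3)] .
  have wz: "w $ j = 0" if j: "k \<le> j" "j < N" for j
  proof -
    have "w $ j = (\<Sum>l = 0..<N. B $$ (j, l) * v $ l) - B $$ (k, k) * v $ j"
      unfolding w_def Fv_def using j B Suc(3) by (simp add: scalar_prod_def)
    also have "(\<Sum>l = 0..<N. B $$ (j, l) * v $ l) = (\<Sum>l = 0..<N. if l = j then B $$ (j, j) * v $ j else 0)"
    proof (rule sum.cong[OF refl])
      fix l assume l: "l \<in> {0..<N}"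
      show "B $$ (j, l) * v $ l = (if l = j then B $$ (j, j) * v $ j else 0)"
      proof (cases "l = j")
        case False
        show ?thesis
        proof (cases "l < j")
          case True
          hence "B $$ (j, l) = 0" using ut j B unfolding upper_triangular_def by auto
          thus ?thesis using False by simp
        next
          case False2: False
          hence "Suc k \<le> l" using \<open>l \<noteq> j\<close> j by auto
          hence "v $ l = 0" using Suc(4) l by auto
          thus ?thesis using False by simp
        qed
      qed simp
    qed
    also have "\<dots> = B $$ (j, j) * v $ j" using j by simp
    finally have e: "w $ j = B $$ (j, j) * v $ j - B $$ (k, k) * v $ j" .
    show ?thesis
    proof (cases "j = k")
      case True thus ?thesis using e by simp
    next
      case False
      hence "v $ j = 0" using Suc(4) j by auto
      thus ?thesis using e by simp
    qed
  qed
  have "foldr (Fv B) (map (\<lambda>i. B $$ (i, i)) [0..<Suc k]) v = foldr (Fv B) (map (\<lambda>i. B $$ (i, i)) [0..<k]) w"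
    unfolding w_def by simp
  also have "\<dots> = 0\<^sub>v N" by (rule Suc(1)) (use Suc(2) wC wz in auto)
  finally show ?case .
qed

lemma foldr_Fv_sim: assumes A: "A \<in> carrier_mat N N" and B: "B \<in> carrier_mat N N" and P: "P \<in> carrier_mat N N"
  and AP: "A * P = P * B" and w: "w \<in> carrier_vec N"
  shows "foldr (Fv A) es (P *\<^sub>v w) = P *\<^sub>v foldr (Fv B) es w"
proof (induction es)
  case Nil thus ?case by simp
next
  case (Cons e es)
  define f where "f = foldr (Fv B) es w"
  have fC: "f \<in> carrier_vec N" unfolding f_def by (rule foldr_Fv_carrier[OF B w])
  have "foldr (Fv A) (e # es) (P *\<^sub>v w) = Fv A e (P *\<^sub>v f)" using Cons unfolding f_def by simp
  also have "\<dots> = (A * P) *\<^sub>v f - e \<cdot>\<^sub>v (P *\<^sub>v f)"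
    unfolding Fv_def using assoc_mult_mat_vec[OF A P fC] by simp
  also have "\<dots> = P *\<^sub>v (B *\<^sub>v f) - P *\<^sub>v (e \<cdot>\<^sub>v f)"
    unfolding AP using assoc_mult_mat_vec[OF P B fC] mult_mat_vec[OF P fC] by simp
  also have "\<dots> = P *\<^sub>v Fv B e f"
    unfolding Fv_def using P B fC by (subst mult_minus_distrib_mat_vec) auto
  finally show ?case unfolding f_def by simp
qed

lemma annihilator_mat: assumes A: "A \<in> carrier_mat N N"
  shows "\<exists>es. length es = N \<and> (\<forall>v \<in> carrier_vec N. foldr (Fv A) es v = 0\<^sub>v N)"
proof -
  obtain es where es: "char_poly A = (\<Prod>a\<leftarrow>es. [:- a, 1:])" using char_poly_factorized[OF A] by blast
  obtain B P Q where sd: "schur_decomposition A es = (B, P, Q)" by (cases "schur_decomposition A es") auto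
  from schur_decomposition[OF A es sd] have sim: "similar_mat_wit A B P Q" and ut: "upper_triangular B"
    and dg: "diag_mat B = es" by auto
  from sim A have BC: "B \<in> carrier_mat N N" and PC: "P \<in> carrier_mat N N" and QC: "Q \<in> carrier_mat N N"
    and PQ: "P * Q = 1\<^sub>m N" and QP: "Q * P = 1\<^sub>m N" and APBQ: "A = P * B * Q"
    unfolding similar_mat_wit_def Let_def by auto
  have AP: "A * P = P * B"
  proof -
    have "A * P = P * B * (Q * P)" unfolding APBQ using PC BC QC by (simp add: assoc_mult_mat[of _ N N _ N _ N])
    also have "\<dots> = P * B" unfolding QP using PC BC by simp
    finally show ?thesis .
  qed
  have esB: "es = map (\<lambda>i. B $$ (i, i)) [0..<N]" using dg BC unfolding diag_mat_def by auto
  show ?thesis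
  proof (intro exI conjI ballI)
    show "length es = N" using esB by simp
    fix v :: "complex vec" assume v: "v \<in> carrier_vec N"
    have Qv: "Q *\<^sub>v v \<in> carrier_vec N" using QC v by simp
    have "v = P *\<^sub>v (Q *\<^sub>v v)" using assoc_mult_mat_vec[OF PC QC v] PQ v by simp
    hence "foldr (Fv A) es v = P *\<^sub>v foldr (Fv B) es (Q *\<^sub>v v)"
      using foldr_Fv_sim[OF A BC PC AP Qv] by simp
    also have "foldr (Fv B) es (Q *\<^sub>v v) = 0\<^sub>v N"
      unfolding esB by (rule upper_tri_CH[OF BC ut]) (use Qv in auto)
    also have "P *\<^sub>v 0\<^sub>v N = 0\<^sub>v N" using PC by (intro eq_vecI) (auto simp: scalar_prod_def)
    finally show "foldr (Fv A) es v = 0\<^sub>v N" .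
  qed
qed

lemma prod_list_count: "prod_list (map f es) = (\<Prod>c\<in>set es. f c ^ count_list es c)"
  for f :: "'a \<Rightarrow> 'b :: comm_monoid_mult"
proof (induction es)
  case Nil thus ?case by simp
next
  case (Cons e es)
  show ?case
  proof (cases "e \<in> set es")
    case True
    have "(\<Prod>c\<in>set (e # es). f c ^ count_list (e # es) c) = (\<Prod>c\<in>set es. (if c = e then f c else 1) * f c ^ count_list es c)"
      using True by (intro prod.cong) auto
    also have "\<dots> = (\<Prod>c\<in>set es. (if c = e then f c else 1)) * (\<Prod>c\<in>set es. f c ^ count_list es c)"
      by (rule prod.distrib)
    also have "(\<Prod>c\<in>set es. (if c = e then f c else 1)) = f e" using True by (simp add: prod.delta')
    finally show ?thesis using Cons by simp
  next
    case False
    have "(\<Prod>c\<in>set (e # es). f c ^ count_list (e # es) c) = f e ^ count_list (e # es) e * (\<Prod>c\<in>set es. f c ^ count_list (e # es) c)"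
      using False by simp
    also have "(\<Prod>c\<in>set es. f c ^ count_list (e # es) c) = (\<Prod>c\<in>set es. f c ^ count_list es c)"
      using False by (intro prod.cong) auto
    finally show ?thesis using Cons False by simp
  qed
qed

lemma pev_prod_list_vec: assumes L: "lin_map n L" and X: "X \<in> carrier_mat n n"
  shows "vec_of n (pev n L (\<Prod>e\<leftarrow>es. [:-e, 1:]) X) = foldr (Fv (mat_of_lin n L)) es (vec_of n X)"
proof (induction es)
  case Nil thus ?case using pev_one[OF L X] by simp
next
  case (Cons e es)
  define Y where "Y = pev n L (\<Prod>e\<leftarrow>es. [:-e, 1:]) X"
  have YC: "Y \<in> carrier_mat n n" unfolding Y_def using pev_carrier[OF L X] .
  have pe: "(\<Prod>e\<leftarrow>e # es. [:-e, 1:]) = [:-e, 1:] * (\<Prod>e\<leftarrow>es. [:-e, 1:])" by simp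
  have "pev n L (\<Prod>e\<leftarrow>e # es. [:-e, 1:]) X = L Y - e \<cdot>\<^sub>m Y"
    unfolding pe Y_def pev_mult[OF L X] by (rule pev_linear_factor[OF L pev_carrier[OF L X]])
  moreover have "vec_of n (L Y - e \<cdot>\<^sub>m Y) = vec_of n (L Y) - e \<cdot>\<^sub>v vec_of n Y"
  proof (rule eq_vecI)
    fix i assume "i < dim_vec (vec_of n (L Y) - e \<cdot>\<^sub>v vec_of n Y)"
    hence i: "i < n * n" by (simp add: vec_of_def)
    note dm = div_mod_lt[OF i]
    show "vec_of n (L Y - e \<cdot>\<^sub>m Y) $ i = (vec_of n (L Y) - e \<cdot>\<^sub>v vec_of n Y) $ i"
      using i dm carrier_matD[OF YC] carrier_matD[OF lin_mapD(1)[OF L YC]] unfolding vec_of_def by simp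
  qed (simp add: vec_of_def)
  ultimately show ?case using Cons mat_of_lin_vec[OF L YC] unfolding Y_def Fv_def by simp
qed

lemma annihilator: assumes L: "lin_map n L"
  shows "\<exists>C k. finite C \<and> (\<forall>c\<in>C. k c \<le> n * n) \<and>
     (\<forall>X\<in>carrier_mat n n. pev n L (\<Prod>c\<in>C. [:-c, 1:] ^ k c) X = 0\<^sub>m n n)"
proof -
  obtain es where es: "length es = n * n" "\<forall>v \<in> carrier_vec (n*n). foldr (Fv (mat_of_lin n L)) es v = 0\<^sub>v (n*n)"
    using annihilator_mat[OF mat_of_lin_carrier] by blast
  show ?thesis
  proof (intro exI conjI ballI)
    show "finite (set es)" by simp
    show "\<And>c. c \<in> set es \<Longrightarrow> count_list es c \<le> n * n" using es(1) count_le_length by metis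
    fix X :: "complex mat" assume X: "X \<in> carrier_mat n n"
    have "vec_of n (pev n L (\<Prod>e\<leftarrow>es. [:-e, 1:]) X) = 0\<^sub>v (n*n)"
      using pev_prod_list_vec[OF L X] es(2) by simp
    hence "pev n L (\<Prod>e\<leftarrow>es. [:-e, 1:]) X = 0\<^sub>m n n" by (rule vec_of_inj[OF pev_carrier[OF L X]])
    thus "pev n L (\<Prod>c\<in>set es. [:-c, 1:] ^ count_list es c) X = 0\<^sub>m n n"
      using prod_list_count[of "\<lambda>e. [:-e, 1:]" es] by simp
  qed
qed


section \<open>Positive semidefinite matrices: entries bounded by the trace\<close>

lemma sum_if_right: fixes p n :: nat shows "p < n \<Longrightarrow> (\<Sum>s<n. f s * (if s = p then a else 0)) = f p * (a :: complex)"
proof -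
  assume p: "p < n"
  have "(\<Sum>s<n. f s * (if s = p then a else 0)) = (\<Sum>s<n. if s = p then f s * a else 0)"
    by (rule sum.cong) auto
  also have "\<dots> = f p * a" using p by simp
  finally show ?thesis .
qed

lemma sum_if_left: fixes p n :: nat shows "p < n \<Longrightarrow> (\<Sum>s<n. (if s = p then a else 0) * f s) = (a :: complex) * f p"
  using sum_if_right[of p n f a] by (simp add: mult.commute)

definition vec2 :: "nat \<Rightarrow> nat \<Rightarrow> nat \<Rightarrow> complex \<Rightarrow> complex \<Rightarrow> complex vec" where
  "vec2 n p q a b = vec n (\<lambda>i. (if i = p then a else 0) + (if i = q then b else 0))"

lemma qf_two: assumes A: "A \<in> carrier_mat n n" and pq: "p < n" "q < n"
  shows "conjugate (vec2 n p q a b) \<bullet> (A *\<^sub>v vec2 n p q a b)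
       = cnj a * (a * A $$ (p, p) + b * A $$ (p, q)) + cnj b * (a * A $$ (q, p) + b * A $$ (q, q))"
proof -
  have Av: "(A *\<^sub>v vec2 n p q a b) $ r = a * A $$ (r, p) + b * A $$ (r, q)" if r: "r < n" for r
  proof -
    have "(A *\<^sub>v vec2 n p q a b) $ r = (\<Sum>s<n. A $$ (r, s) * ((if s = p then a else 0) + (if s = q then b else 0)))"
      using A r unfolding vec2_def by (simp add: scalar_prod_def atLeast0LessThan)
    also have "\<dots> = (\<Sum>s<n. A $$ (r, s) * (if s = p then a else 0)) + (\<Sum>s<n. A $$ (r, s) * (if s = q then b else 0))"
      by (simp only: distrib_left sum.distrib)
    also have "\<dots> = a * A $$ (r, p) + b * A $$ (r, q)" using pq by (simp add: sum_if_right mult.commute)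
    finally show ?thesis .
  qed
  have "conjugate (vec2 n p q a b) \<bullet> (A *\<^sub>v vec2 n p q a b)
      = (\<Sum>r<n. cnj ((if r = p then a else 0) + (if r = q then b else 0)) * (a * A $$ (r, p) + b * A $$ (r, q)))"
    using A Av unfolding vec2_def by (simp add: scalar_prod_def atLeast0LessThan)
  also have "\<dots> = (\<Sum>r<n. (if r = p then cnj a else 0) * (a * A $$ (r, p) + b * A $$ (r, q)))
                + (\<Sum>r<n. (if r = q then cnj b else 0) * (a * A $$ (r, p) + b * A $$ (r, q)))"
    unfolding sum.distrib[symmetric] by (intro sum.cong refl) (simp add: distrib_right)
  also have "\<dots> = cnj a * (a * A $$ (p, p) + b * A $$ (p, q)) + cnj b * (a * A $$ (q, p) + b * A $$ (q, q))"
    using pq by (simp add: sum_if_left)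
  finally show ?thesis .
qed

lemma psd_qf: assumes "mat_psd n A" "p < n" "q < n"
  shows "Im (cnj a * (a * A $$ (p, p) + b * A $$ (p, q)) + cnj b * (a * A $$ (q, p) + b * A $$ (q, q))) = 0
       \<and> Re (cnj a * (a * A $$ (p, p) + b * A $$ (p, q)) + cnj b * (a * A $$ (q, p) + b * A $$ (q, q))) \<ge> 0"
proof -
  have A: "A \<in> carrier_mat n n" and h: "\<forall>v \<in> carrier_vec n. Im (conjugate v \<bullet> (A *\<^sub>v v)) = 0 \<and> Re (conjugate v \<bullet> (A *\<^sub>v v)) \<ge> 0"
    using assms(1) unfolding mat_psd_def Let_def by auto
  have "vec2 n p q a b \<in> carrier_vec n" unfolding vec2_def by simp
  from h[rule_format, OF this] show ?thesis unfolding qf_two[OF A assms(2,3)] .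
qed

lemma psd_diag: assumes "mat_psd n A" "p < n" shows "Im (A $$ (p, p)) = 0" "Re (A $$ (p, p)) \<ge> 0"
  using psd_qf[OF assms assms(2), of 1 0] by auto

lemma psd_herm: assumes P: "mat_psd n A" and pq: "p < n" "q < n"
  shows "A $$ (q, p) = cnj (A $$ (p, q))"
proof -
  have d: "Im (A $$ (p, p)) = 0" "Im (A $$ (q, q)) = 0" using psd_diag[OF P] pq by auto
  have 1: "Im (A $$ (p, p) + A $$ (p, q) + (A $$ (q, p) + A $$ (q, q))) = 0"
    using psd_qf[OF P pq, of 1 1] by simp
  have 2: "Im (A $$ (p, p) + \<i> * A $$ (p, q) + (- \<i>) * (A $$ (q, p) + \<i> * A $$ (q, q))) = 0"
    using psd_qf[OF P pq, of 1 "\<i>"] by simp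
  show ?thesis using 1 2 d by (simp add: complex_eq_iff)
qed

lemma psd_offdiag: assumes P: "mat_psd n A" and pq: "p < n" "q < n"
  shows "2 * cmod (A $$ (p, q)) \<le> Re (A $$ (p, p)) + Re (A $$ (q, q))"
proof (cases "A $$ (p, q) = 0")
  case True thus ?thesis using psd_diag[OF P] pq by auto
next
  case False
  define a where "a = A $$ (p, q)"
  have an: "cmod a > 0" using False unfolding a_def by simp
  define w where "w = cnj a / of_real (cmod a)"
  have wa: "w * a = of_real (cmod a)" unfolding w_def using an
    by (simp add: complex_norm_square[symmetric] power2_eq_square field_simps mult.commute)
  have ww: "cnj w * w = 1" unfolding w_def using an
    by (simp add: complex_norm_square[symmetric] power2_eq_square field_simps)
  have h: "A $$ (q, p) = cnj a" using psd_herm[OF P pq] unfolding a_def .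
  have "Re (cnj 1 * (1 * A $$ (p, p) + (- w) * A $$ (p, q)) + cnj (- w) * (1 * A $$ (q, p) + (- w) * A $$ (q, q))) \<ge> 0"
    using psd_qf[OF P pq, of 1 "- w"] by blast
  also have "cnj 1 * (1 * A $$ (p, p) + (- w) * A $$ (p, q)) + cnj (- w) * (1 * A $$ (q, p) + (- w) * A $$ (q, q))
     = A $$ (p, p) + A $$ (q, q) * (cnj w * w) - w * a - cnj (w * a)"
    unfolding h a_def[symmetric] by (simp add: algebra_simps)
  also have "\<dots> = A $$ (p, p) + A $$ (q, q) - 2 * of_real (cmod a)" unfolding ww wa by simp
  finally show ?thesis unfolding a_def by simp
qed

lemma psd_bound: assumes P: "mat_psd n A" and pq: "p < n" "q < n"
  shows "cmod (A $$ (p, q)) \<le> Re (mat_trace A)"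
proof -
  have A: "A \<in> carrier_mat n n" using P unfolding mat_psd_def by auto
  have tr: "Re (mat_trace A) = (\<Sum>i<n. Re (A $$ (i, i)))" using A unfolding mat_trace_def by (simp add: Re_sum)
  have nn: "\<And>i. i < n \<Longrightarrow> Re (A $$ (i, i)) \<ge> 0" using psd_diag[OF P] by auto
  have sub: "(\<Sum>i\<in>{p, q}. Re (A $$ (i, i))) \<le> (\<Sum>i<n. Re (A $$ (i, i)))"
    by (rule sum_mono2) (use pq nn in auto)
  show ?thesis
  proof (cases "p = q")
    case True
    have "cmod (A $$ (p, p)) = Re (A $$ (p, p))" using psd_diag[OF P pq(1)]
      by (simp add: cmod_eq_Re)
    thus ?thesis using sub True tr by simp
  next
    case False
    have "cmod (A $$ (p, q)) \<le> Re (A $$ (p, p)) + Re (A $$ (q, q))"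
      using psd_offdiag[OF P pq] psd_diag(2)[OF P pq(1)] psd_diag(2)[OF P pq(2)] by linarith
    thus ?thesis using sub False tr by simp
  qed
qed


definition r1 :: "nat \<Rightarrow> (nat \<Rightarrow> complex) \<Rightarrow> complex mat" where
  "r1 n w = mat n n (\<lambda>(r, s). w r * cnj (w s))"

lemma r1_carrier[simp]: "r1 n w \<in> carrier_mat n n" unfolding r1_def by simp

lemma r1_psd: "mat_psd n (r1 n w)"
  unfolding mat_psd_def Let_def
proof (intro conjI ballI r1_carrier)
  fix v :: "complex vec" assume v: "v \<in> carrier_vec n"
  define z where "z = (\<Sum>r<n. cnj (v $ r) * w r)"
  have "conjugate v \<bullet> (r1 n w *\<^sub>v v) = (\<Sum>r<n. cnj (v $ r) * (\<Sum>s<n. w r * cnj (w s) * v $ s))"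
    using v unfolding r1_def by (simp add: scalar_prod_def atLeast0LessThan)
  also have "\<dots> = (\<Sum>r<n. cnj (v $ r) * w r * (\<Sum>s<n. cnj (w s) * v $ s))"
    by (intro sum.cong refl) (simp add: sum_distrib_left mult.assoc)
  also have "\<dots> = z * (\<Sum>s<n. cnj (w s) * v $ s)" unfolding z_def by (simp add: sum_distrib_right)
  also have "(\<Sum>s<n. cnj (w s) * v $ s) = cnj z" unfolding z_def by (simp add: mult.commute)
  finally have e: "conjugate v \<bullet> (r1 n w *\<^sub>v v) = z * cnj z" .
  have "z * cnj z = of_real ((cmod z)\<^sup>2)" by (rule complex_norm_square[symmetric])
  thus "Im (conjugate v \<bullet> (r1 n w *\<^sub>v v)) = 0" "0 \<le> Re (conjugate v \<bullet> (r1 n w *\<^sub>v v))"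
    unfolding e by simp_all
qed

definition wk :: "nat \<Rightarrow> nat \<Rightarrow> nat \<Rightarrow> nat \<Rightarrow> complex" where
  "wk i j m r = (if r = i then 1 else 0) + \<i> ^ m * (if r = j then 1 else 0)"

lemma sum4: fixes f :: "nat \<Rightarrow> complex" shows "(\<Sum>m<4. f m) = f 0 + f 1 + f 2 + f 3"
  by (simp add: eval_nat_numeral)

lemma polar_id: "(\<Sum>m<4. \<i> ^ m / 4 * ((x + \<i> ^ m * y) * (u + cnj (\<i> ^ m) * v))) = x * v"
proof -
  have i3: "\<i> ^ 3 = - \<i>" by (simp add: eval_nat_numeral)
  show ?thesis unfolding sum4 by (simp add: i3 field_simps)
qed

lemma polarization: "mat_unit n i j = msum n (\<lambda>m. (\<i> ^ m / 4) \<cdot>\<^sub>m r1 n (wk i j m)) {..<4}"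
proof (rule eq_matI)
  fix r s assume "r < dim_row (msum n (\<lambda>m. (\<i> ^ m / 4) \<cdot>\<^sub>m r1 n (wk i j m)) {..<4})"
    "s < dim_col (msum n (\<lambda>m. (\<i> ^ m / 4) \<cdot>\<^sub>m r1 n (wk i j m)) {..<4})"
  hence rs: "r < n" "s < n" by auto
  have "msum n (\<lambda>m. (\<i> ^ m / 4) \<cdot>\<^sub>m r1 n (wk i j m)) {..<4} $$ (r, s)
      = (\<Sum>m<4. \<i> ^ m / 4 * (wk i j m r * cnj (wk i j m s)))"
    using rs by (simp add: msum_index r1_def)
  also have "\<dots> = (if r = i \<and> s = j then 1 else 0)"
  proof -
    have "\<And>m. wk i j m r * cnj (wk i j m s) = ((if r = i then 1 else 0) + \<i> ^ m * (if r = j then 1 else 0))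
        * ((if s = i then 1 else 0) + cnj (\<i> ^ m) * (if s = j then 1 else 0))"
      unfolding wk_def by simp
    hence "(\<Sum>m<4. \<i> ^ m / 4 * (wk i j m r * cnj (wk i j m s)))
      = (if r = i then 1 else 0) * (if s = j then 1 else 0)"
      by (simp only: polar_id)
    thus ?thesis by simp
  qed
  finally show "mat_unit n i j $$ (r, s) = msum n (\<lambda>m. (\<i> ^ m / 4) \<cdot>\<^sub>m r1 n (wk i j m)) {..<4} $$ (r, s)"
    using rs by (simp add: mat_unit_index)
qed auto


lemma mat_kron_index: assumes "A \<in> carrier_mat d d" "B \<in> carrier_mat d' d'" "p < d * d'" "q < d * d'"
  shows "mat_kron A B $$ (p, q) = A $$ (p div d', q div d') * B $$ (p mod d', q mod d')"
  using assms unfolding mat_kron_def by auto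

lemma mat_kron_carrier: assumes "A \<in> carrier_mat d d" "B \<in> carrier_mat d' d'"
  shows "mat_kron A B \<in> carrier_mat (d * d') (d * d')"
  using assms unfolding mat_kron_def by auto

lemma tensor_map_carrier[simp]: "tensor_map d d' T S X \<in> carrier_mat (d * d') (d * d')"
  unfolding tensor_map_def by simp

context fixes d T assumes ch: "quantum_channel d T"
begin

lemma ch_lin: "lin_map d T" using ch unfolding quantum_channel_def by auto

lemma ch_tp: "X \<in> carrier_mat d d \<Longrightarrow> mat_trace (T X) = mat_trace X"
  using ch unfolding quantum_channel_def trace_preserving_def by auto

lemma tensor_map_1: assumes X: "X \<in> carrier_mat d d" shows "tensor_map d 1 T id X = T X"
proof (rule eq_matI)
  have TE: "\<And>i j. T (mat_unit d i j) \<in> carrier_mat d d" using lin_mapD(1)[OF ch_lin] by simp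
  fix p q assume "p < dim_row (T X)" "q < dim_col (T X)"
  hence pq: "p < d" "q < d" using lin_mapD(1)[OF ch_lin X] by auto
  have "tensor_map d 1 T id X $$ (p, q) = (\<Sum>i<d. \<Sum>j<d. X $$ (i, j) * T (mat_unit d i j) $$ (p, q))"
    unfolding tensor_map_def using pq TE
    by (auto simp: mat_kron_index[OF TE mat_unit_carrier] mat_unit_index intro!: sum.cong)
  also have "\<dots> = T X $$ (p, q)" by (rule lin_expand[OF ch_lin X pq, symmetric])
  finally show "tensor_map d 1 T id X $$ (p, q) = T X $$ (p, q)" .
qed (use lin_mapD(1)[OF ch_lin X] tensor_map_carrier[of d 1 T id X] in auto)

lemma ch_pos: assumes P: "mat_psd d X" shows "mat_psd d (T X)"
proof -
  have X: "X \<in> carrier_mat d d" using P unfolding mat_psd_def by auto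
  have cp: "\<forall>k X. mat_psd (d * k) X \<longrightarrow> mat_psd (d * k) (tensor_map d k T id X)"
    using ch unfolding quantum_channel_def completely_positive_def by simp
  have "mat_psd (d * 1) X" using P by simp
  hence "mat_psd (d * 1) (tensor_map d 1 T id X)" using cp by blast
  thus ?thesis using tensor_map_1[OF X] by simp
qed

lemma ch_pow_lin: "lin_map d (T ^^ k)" by (rule lin_funpow[OF ch_lin])

lemma ch_pow_pos: "mat_psd d X \<Longrightarrow> mat_psd d ((T ^^ k) X)"
  by (induction k) (auto intro: ch_pos)

lemma ch_pow_tp: "X \<in> carrier_mat d d \<Longrightarrow> mat_trace ((T ^^ k) X) = mat_trace X"
proof (induction k)
  case (Suc k)
  have "(T ^^ k) X \<in> carrier_mat d d" using lin_mapD(1)[OF ch_pow_lin Suc(2)] .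
  thus ?case using Suc ch_tp by simp
qed simp

definition "beta i j = (\<Sum>m<4. Re (mat_trace (r1 d (wk i j m))) / 4)"

lemma unit_bound: assumes pq: "p < d" "q < d"
  shows "cmod ((T ^^ k) (mat_unit d i j) $$ (p, q)) \<le> beta i j"
proof -
  have "(T ^^ k) (mat_unit d i j) = (T ^^ k) (msum d (\<lambda>m. (\<i> ^ m / 4) \<cdot>\<^sub>m r1 d (wk i j m)) {..<4})"
    using polarization by metis
  also have "\<dots> = msum d (\<lambda>m. (T ^^ k) ((\<i> ^ m / 4) \<cdot>\<^sub>m r1 d (wk i j m))) {..<4}"
    by (rule lin_msum[OF ch_pow_lin]) auto
  also have "\<dots> = msum d (\<lambda>m. (\<i> ^ m / 4) \<cdot>\<^sub>m (T ^^ k) (r1 d (wk i j m))) {..<4}"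
    by (rule msum_cong) (rule lin_mapD(3)[OF ch_pow_lin], simp)
  finally have "(T ^^ k) (mat_unit d i j) $$ (p, q) = (\<Sum>m<4. \<i> ^ m / 4 * (T ^^ k) (r1 d (wk i j m)) $$ (p, q))"
  proof -
    assume e: "(T ^^ k) (mat_unit d i j) = msum d (\<lambda>m. (\<i> ^ m / 4) \<cdot>\<^sub>m (T ^^ k) (r1 d (wk i j m))) {..<4}"
    show ?thesis unfolding e msum_index[OF pq]
    proof (rule sum.cong[OF refl])
      fix m assume "m \<in> {..<4::nat}"
      have "(T ^^ k) (r1 d (wk i j m)) \<in> carrier_mat d d" using lin_mapD(1)[OF ch_pow_lin r1_carrier] .
      thus "((\<i> ^ m / 4) \<cdot>\<^sub>m (T ^^ k) (r1 d (wk i j m))) $$ (p, q) = \<i> ^ m / 4 * (T ^^ k) (r1 d (wk i j m)) $$ (p, q)"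
        using pq by auto
    qed
  qed
  hence "cmod ((T ^^ k) (mat_unit d i j) $$ (p, q)) \<le> (\<Sum>m<4. cmod (\<i> ^ m / 4 * (T ^^ k) (r1 d (wk i j m)) $$ (p, q)))"
    by (simp only: norm_sum)
  also have "\<dots> \<le> (\<Sum>m<4. Re (mat_trace (r1 d (wk i j m))) / 4)"
  proof (rule sum_mono)
    fix m assume "m \<in> {..<4::nat}"
    have "cmod ((T ^^ k) (r1 d (wk i j m)) $$ (p, q)) \<le> Re (mat_trace ((T ^^ k) (r1 d (wk i j m))))"
      by (rule psd_bound[OF ch_pow_pos[OF r1_psd] pq])
    also have "\<dots> = Re (mat_trace (r1 d (wk i j m)))" using ch_pow_tp[OF r1_carrier] by simp
    finally show "cmod (\<i> ^ m / 4 * (T ^^ k) (r1 d (wk i j m)) $$ (p, q)) \<le> Re (mat_trace (r1 d (wk i j m))) / 4"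
      by (simp add: norm_mult norm_divide norm_power)
  qed
  finally show ?thesis unfolding beta_def .
qed

lemma ch_bounded: assumes X: "X \<in> carrier_mat d d"
  shows "\<exists>B. \<forall>k p q. p < d \<longrightarrow> q < d \<longrightarrow> cmod ((T ^^ k) X $$ (p, q)) \<le> B"
proof (intro exI allI impI)
  fix k p q assume pq: "p < d" "q < d"
  have "cmod ((T ^^ k) X $$ (p, q)) = cmod (\<Sum>i<d. \<Sum>j<d. X $$ (i, j) * (T ^^ k) (mat_unit d i j) $$ (p, q))"
    using lin_expand[OF ch_pow_lin X pq] by simp
  also have "\<dots> \<le> (\<Sum>i<d. \<Sum>j<d. cmod (X $$ (i, j)) * beta i j)"
  proof -
    have "cmod (\<Sum>i<d. \<Sum>j<d. X $$ (i, j) * (T ^^ k) (mat_unit d i j) $$ (p, q))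
       \<le> (\<Sum>i<d. cmod (\<Sum>j<d. X $$ (i, j) * (T ^^ k) (mat_unit d i j) $$ (p, q)))" by (rule norm_sum)
    also have "\<dots> \<le> (\<Sum>i<d. \<Sum>j<d. cmod (X $$ (i, j) * (T ^^ k) (mat_unit d i j) $$ (p, q)))"
      by (intro sum_mono norm_sum)
    also have "\<dots> \<le> (\<Sum>i<d. \<Sum>j<d. cmod (X $$ (i, j)) * beta i j)"
      by (intro sum_mono) (auto simp: norm_mult intro!: mult_left_mono unit_bound[OF pq])
    finally show ?thesis .
  qed
  finally show "cmod ((T ^^ k) X $$ (p, q)) \<le> (\<Sum>i<d. \<Sum>j<d. cmod (X $$ (i, j)) * beta i j)" .
qed

end


declare minus_carrier_mat[simp]

context fixes n L assumes L: "lin_map n L"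
  and BP: "\<And>X. X \<in> carrier_mat n n \<Longrightarrow> \<exists>B. \<forall>k p q. p < n \<longrightarrow> q < n \<longrightarrow> cmod ((L ^^ k) X $$ (p, q)) \<le> B"
begin

lemma phi_carrier: assumes Y: "Y \<in> carrier_mat n n" shows "L Y - c \<cdot>\<^sub>m Y \<in> carrier_mat n n"
proof -
  have "L Y \<in> carrier_mat n n" by (rule lin_mapD(1)[OF L Y])
  thus ?thesis using Y by simp
qed

lemma phi_pow_carrier: "Y \<in> carrier_mat n n \<Longrightarrow> ((\<lambda>Y. L Y - c \<cdot>\<^sub>m Y) ^^ k) Y \<in> carrier_mat n n"
proof (induction k)
  case (Suc k) thus ?case using phi_carrier by simp
qed simp

lemma nonzero_entry: assumes Y: "Y \<in> carrier_mat n n" "Y \<noteq> 0\<^sub>m n n"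
  obtains p q where "p < n" "q < n" "Y $$ (p, q) \<noteq> 0"
proof -
  have "\<exists>p q. p < n \<and> q < n \<and> Y $$ (p, q) \<noteq> 0"
  proof (rule ccontr)
    assume "\<not> ?thesis"
    hence "Y = 0\<^sub>m n n" using Y(1) by (intro eq_matI) auto
    thus False using Y(2) by simp
  qed
  thus ?thesis using that by blast
qed

lemma pow_eig: assumes Y: "Y \<in> carrier_mat n n" and e: "L Y = c \<cdot>\<^sub>m Y"
  shows "(L ^^ k) Y = c ^ k \<cdot>\<^sub>m Y"
proof (induction k)
  case 0 thus ?case using Y by (intro eq_matI) auto
next
  case (Suc k)
  have "(L ^^ Suc k) Y = L (c ^ k \<cdot>\<^sub>m Y)" using Suc by simp
  also have "\<dots> = c ^ k \<cdot>\<^sub>m (c \<cdot>\<^sub>m Y)" using lin_mapD(3)[OF L Y] e by simp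
  also have "\<dots> = c ^ Suc k \<cdot>\<^sub>m Y" using Y by (intro eq_matI) auto
  finally show ?case .
qed

lemma eig_bound: assumes Y: "Y \<in> carrier_mat n n" "Y \<noteq> 0\<^sub>m n n" and e: "L Y = c \<cdot>\<^sub>m Y"
  shows "cmod c \<le> 1"
proof (rule ccontr)
  assume c: "\<not> cmod c \<le> 1"
  obtain p q where pq: "p < n" "q < n" "Y $$ (p, q) \<noteq> 0" using nonzero_entry[OF Y] by blast
  obtain B where B: "\<And>k. cmod ((L ^^ k) Y $$ (p, q)) \<le> B" using BP[OF Y(1)] pq by blast
  have y: "cmod (Y $$ (p, q)) > 0" using pq by simp
  obtain k where k: "B / cmod (Y $$ (p, q)) < cmod c ^ k" using real_arch_pow[of "cmod c" "B / cmod (Y $$ (p, q))"] c by auto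
  have "cmod ((L ^^ k) Y $$ (p, q)) = cmod c ^ k * cmod (Y $$ (p, q))"
    using pow_eig[OF Y(1) e] pq Y(1) by (simp add: norm_mult norm_power)
  moreover have "B < cmod c ^ k * cmod (Y $$ (p, q))" using k y by (simp add: field_simps)
  ultimately show False using B[of k] by simp
qed

lemma pow_jordan: assumes Y: "Y \<in> carrier_mat n n" and W: "W = L Y - c \<cdot>\<^sub>m Y" and LW: "L W = c \<cdot>\<^sub>m W"
  shows "(L ^^ k) Y = c ^ k \<cdot>\<^sub>m Y + (of_nat k * c ^ (k - 1)) \<cdot>\<^sub>m W"
proof (induction k)
  case 0 thus ?case using Y W lin_mapD(1)[OF L Y] by (intro eq_matI) auto
next
  case (Suc k)
  have WC: "W \<in> carrier_mat n n" using W phi_carrier[OF Y] by simp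
  have LY: "L Y = c \<cdot>\<^sub>m Y + W" using W Y lin_mapD(1)[OF L Y] by (intro eq_matI) auto
  have "(L ^^ Suc k) Y = L (c ^ k \<cdot>\<^sub>m Y + (of_nat k * c ^ (k - 1)) \<cdot>\<^sub>m W)" using Suc by simp
  also have "\<dots> = c ^ k \<cdot>\<^sub>m (c \<cdot>\<^sub>m Y + W) + (of_nat k * c ^ (k - 1)) \<cdot>\<^sub>m (c \<cdot>\<^sub>m W)"
    using lin_mapD[OF L] Y WC LY LW by simp
  also have "\<dots> = c ^ Suc k \<cdot>\<^sub>m Y + (of_nat (Suc k) * c ^ (Suc k - 1)) \<cdot>\<^sub>m W"
  proof (rule eq_matI)
    fix i j assume ij: "i < dim_row (c ^ Suc k \<cdot>\<^sub>m Y + (of_nat (Suc k) * c ^ (Suc k - 1)) \<cdot>\<^sub>m W)"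
      "j < dim_col (c ^ Suc k \<cdot>\<^sub>m Y + (of_nat (Suc k) * c ^ (Suc k - 1)) \<cdot>\<^sub>m W)"
    hence ij: "i < n" "j < n" using WC by auto
    have e: "of_nat k * c ^ (k - 1) * c = of_nat k * c ^ k"
      by (cases k) (auto simp: mult.commute)
    have "c ^ k * (c * Y $$ (i, j) + W $$ (i, j)) + of_nat k * c ^ (k - 1) * (c * W $$ (i, j))
        = c ^ Suc k * Y $$ (i, j) + of_nat (Suc k) * c ^ (Suc k - 1) * W $$ (i, j)"
      using e by (simp add: algebra_simps; blast)
    thus "(c ^ k \<cdot>\<^sub>m (c \<cdot>\<^sub>m Y + W) + (of_nat k * c ^ (k - 1)) \<cdot>\<^sub>m (c \<cdot>\<^sub>m W)) $$ (i, j) =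
      (c ^ Suc k \<cdot>\<^sub>m Y + (of_nat (Suc k) * c ^ (Suc k - 1)) \<cdot>\<^sub>m W) $$ (i, j)"
      using ij Y WC by simp
  qed (use Y WC in auto)
  finally show ?case .
qed

lemma jordan_trivial: assumes c: "cmod c = 1" and Y: "Y \<in> carrier_mat n n"
  and z: "L (L Y - c \<cdot>\<^sub>m Y) - c \<cdot>\<^sub>m (L Y - c \<cdot>\<^sub>m Y) = 0\<^sub>m n n"
  shows "L Y - c \<cdot>\<^sub>m Y = 0\<^sub>m n n"
proof (rule ccontr)
  define W where "W = L Y - c \<cdot>\<^sub>m Y"
  have WC: "W \<in> carrier_mat n n" using W_def phi_carrier[OF Y] by simp
  assume "L Y - c \<cdot>\<^sub>m Y \<noteq> 0\<^sub>m n n"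
  hence W0: "W \<noteq> 0\<^sub>m n n" unfolding W_def .
  have LW: "L W = c \<cdot>\<^sub>m W" using z lin_mapD(1)[OF L WC] WC unfolding W_def[symmetric]
  proof -
    assume z: "L W - c \<cdot>\<^sub>m W = 0\<^sub>m n n"
    show "L W = c \<cdot>\<^sub>m W"
    proof (rule eq_matI)
      fix i j assume "i < dim_row (c \<cdot>\<^sub>m W)" "j < dim_col (c \<cdot>\<^sub>m W)"
      hence ij: "i < n" "j < n" using WC by auto
      have "(L W - c \<cdot>\<^sub>m W) $$ (i, j) = 0" using z ij by simp
      thus "L W $$ (i, j) = (c \<cdot>\<^sub>m W) $$ (i, j)" using ij WC lin_mapD(1)[OF L WC] by simp
    qed (use WC lin_mapD(1)[OF L WC] in auto)
  qed
  obtain p q where pq: "p < n" "q < n" "W $$ (p, q) \<noteq> 0" using nonzero_entry[OF WC W0] by blast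
  obtain B where B: "\<And>k. cmod ((L ^^ k) Y $$ (p, q)) \<le> B" using BP[OF Y] pq by blast
  have w: "cmod (W $$ (p, q)) > 0" using pq by simp
  obtain k :: nat where k: "(B + cmod (Y $$ (p, q))) / cmod (W $$ (p, q)) < of_nat k"
    using reals_Archimedean2 by blast
  have e: "(L ^^ k) Y $$ (p, q) = c ^ k * Y $$ (p, q) + of_nat k * c ^ (k - 1) * W $$ (p, q)"
    using pow_jordan[OF Y W_def LW] pq Y WC by simp
  have "of_nat k * cmod (W $$ (p, q)) = cmod (of_nat k * c ^ (k - 1) * W $$ (p, q))"
    using c by (simp add: norm_mult norm_power)
  also have "\<dots> \<le> cmod ((L ^^ k) Y $$ (p, q)) + cmod (c ^ k * Y $$ (p, q))"
  proof -
    have "of_nat k * c ^ (k - 1) * W $$ (p, q) = (L ^^ k) Y $$ (p, q) - c ^ k * Y $$ (p, q)" using e by simp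
    thus ?thesis using norm_triangle_ineq4 by metis
  qed
  also have "\<dots> \<le> B + cmod (Y $$ (p, q))" using B[of k] c by (simp add: norm_mult norm_power)
  finally have "of_nat k * cmod (W $$ (p, q)) \<le> B + cmod (Y $$ (p, q))" .
  moreover have "B + cmod (Y $$ (p, q)) < of_nat k * cmod (W $$ (p, q))" using k w by (simp add: field_simps)
  ultimately show False by simp
qed

lemma gen_unimod: assumes c: "cmod c = 1" and Z: "Z \<in> gen_eigenspace n L c"
  shows "L Z = c \<cdot>\<^sub>m Z"
proof -
  let ?phi = "\<lambda>Y. L Y - c \<cdot>\<^sub>m Y"
  have ZC: "Z \<in> carrier_mat n n" and Zg: "(?phi ^^ (n * n)) Z = 0\<^sub>m n n" using Z unfolding gen_eigenspace_def by auto
  have step: "(?phi ^^ Suc j) Z = 0\<^sub>m n n \<Longrightarrow> ?phi Z = 0\<^sub>m n n" for j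
  proof (induction j)
    case 0 thus ?case by simp
  next
    case (Suc j)
    have YC: "(?phi ^^ j) Z \<in> carrier_mat n n" by (rule phi_pow_carrier[OF ZC])
    have "?phi (?phi ((?phi ^^ j) Z)) = 0\<^sub>m n n" using Suc(2) by simp
    hence "?phi ((?phi ^^ j) Z) = 0\<^sub>m n n" by (rule jordan_trivial[OF c YC])
    thus ?case using Suc(1) by simp
  qed
  show ?thesis
  proof (cases "n = 0")
    case True thus ?thesis using ZC lin_mapD(1)[OF L ZC] by (intro eq_matI) auto
  next
    case False
    then obtain j where "n * n = Suc j" by (cases "n * n") auto
    hence "?phi Z = 0\<^sub>m n n" using step Zg by simp
    thus ?thesis using ZC lin_mapD(1)[OF L ZC]
    proof -
      assume z: "?phi Z = 0\<^sub>m n n"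
      show ?thesis
      proof (rule eq_matI)
        fix i j assume "i < dim_row (c \<cdot>\<^sub>m Z)" "j < dim_col (c \<cdot>\<^sub>m Z)"
        hence ij: "i < n" "j < n" using ZC by auto
        have "(?phi Z) $$ (i, j) = 0" using z ij by simp
        thus "L Z $$ (i, j) = (c \<cdot>\<^sub>m Z) $$ (i, j)" using ij ZC lin_mapD(1)[OF L ZC] by simp
      qed (use ZC lin_mapD(1)[OF L ZC] in auto)
    qed
  qed
qed

lemma gen_bound: assumes Z: "Z \<in> gen_eigenspace n L c" and Z0: "Z \<noteq> 0\<^sub>m n n"
  shows "cmod c \<le> 1"
proof -
  let ?phi = "\<lambda>Y. L Y - c \<cdot>\<^sub>m Y"
  have ZC: "Z \<in> carrier_mat n n" and Zg: "(?phi ^^ (n * n)) Z = 0\<^sub>m n n" using Z unfolding gen_eigenspace_def by auto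
  have "(?phi ^^ k) Z = 0\<^sub>m n n \<Longrightarrow> Z = 0\<^sub>m n n \<or> (\<exists>Y \<in> carrier_mat n n. Y \<noteq> 0\<^sub>m n n \<and> ?phi Y = 0\<^sub>m n n)" for k
  proof (induction k)
    case 0 thus ?case by simp
  next
    case (Suc k)
    show ?case
    proof (cases "(?phi ^^ k) Z = 0\<^sub>m n n")
      case True thus ?thesis using Suc(1) by blast
    next
      case False
      have "(?phi ^^ k) Z \<in> carrier_mat n n" by (rule phi_pow_carrier[OF ZC])
      thus ?thesis using False Suc(2) by auto
    qed
  qed
  from this[OF Zg] Z0 obtain Y where Y: "Y \<in> carrier_mat n n" "Y \<noteq> 0\<^sub>m n n" "?phi Y = 0\<^sub>m n n" by blast
  have "L Y = c \<cdot>\<^sub>m Y"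
  proof (rule eq_matI)
    fix i j assume "i < dim_row (c \<cdot>\<^sub>m Y)" "j < dim_col (c \<cdot>\<^sub>m Y)"
    hence ij: "i < n" "j < n" using Y by auto
    have "(?phi Y) $$ (i, j) = 0" using Y(3) ij by simp
    thus "L Y $$ (i, j) = (c \<cdot>\<^sub>m Y) $$ (i, j)" using ij Y(1) lin_mapD(1)[OF L Y(1)] by simp
  qed (use Y lin_mapD(1)[OF L Y(1)] in auto)
  thus ?thesis by (rule eig_bound[OF Y(1,2)])
qed

end


lemma idx_div_mod: fixes i k d' :: nat assumes "k < d'" shows "(i * d' + k) div d' = i" "(i * d' + k) mod d' = k"
  using assms by auto

lemma idx_lt: fixes i k d d' :: nat assumes "i < d" "k < d'" shows "i * d' + k < d * d'"
proof -
  have "i * d' + k < i * d' + d'" using assms by simp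
  also have "\<dots> = Suc i * d'" by simp
  also have "\<dots> \<le> d * d'" using assms(1) by (intro mult_le_mono1) simp
  finally show ?thesis .
qed

lemma idx_bounds: fixes p d d' :: nat assumes "p < d * d'" shows "p div d' < d" "p mod d' < d'"
proof -
  have "d' > 0" using assms by (cases d') auto
  thus "p mod d' < d'" by simp
  show "p div d' < d" using assms by (simp add: less_mult_imp_div_less)
qed

lemma sum4_prod: "(\<Sum>i\<in>A. \<Sum>j\<in>A. \<Sum>k\<in>B. \<Sum>l\<in>B. f i j k l)
   = (\<Sum>x\<in>(A \<times> A) \<times> (B \<times> B). f (fst (fst x)) (snd (fst x)) (fst (snd x)) (snd (snd x)))"
  for f :: "'a \<Rightarrow> 'a \<Rightarrow> 'b \<Rightarrow> 'b \<Rightarrow> complex"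
proof -
  have 1: "(\<Sum>k\<in>B. \<Sum>l\<in>B. f i j k l) = (\<Sum>y\<in>B \<times> B. f i j (fst y) (snd y))" for i j
    by (subst sum.cartesian_product) (simp add: split_def)
  have 2: "(\<Sum>i\<in>A. \<Sum>j\<in>A. g i j) = (\<Sum>x\<in>A \<times> A. g (fst x) (snd x))" for g :: "'a \<Rightarrow> 'a \<Rightarrow> complex"
    by (subst sum.cartesian_product) (simp add: split_def)
  have 3: "(\<Sum>x\<in>A \<times> A. \<Sum>y\<in>B \<times> B. h x y) = (\<Sum>z\<in>(A \<times> A) \<times> (B \<times> B). h (fst z) (snd z))" for h :: "'a \<times> 'a \<Rightarrow> 'b \<times> 'b \<Rightarrow> complex"
    by (subst sum.cartesian_product) (simp add: split_def)
  show ?thesis unfolding 1 2 3 ..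
qed

lemma tensor_map_index: "p < d * d' \<Longrightarrow> q < d * d' \<Longrightarrow> tensor_map d d' T S X $$ (p, q) =
  (\<Sum>i<d. \<Sum>j<d. \<Sum>k<d'. \<Sum>l<d'. X $$ (i * d' + k, j * d' + l) * mat_kron (T (mat_unit d i j)) (S (mat_unit d' k l)) $$ (p, q))"
  unfolding tensor_map_def by simp

lemma tensor_map_lin: "lin_map (d * d') (tensor_map d d' T S)"
  unfolding lin_map_def
proof (intro conjI ballI allI)
  fix X :: "complex mat" assume "X \<in> carrier_mat (d * d') (d * d')"
  show "tensor_map d d' T S X \<in> carrier_mat (d * d') (d * d')" by simp
next
  fix X Y :: "complex mat" assume X: "X \<in> carrier_mat (d * d') (d * d')" and Y: "Y \<in> carrier_mat (d * d') (d * d')"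
  show "tensor_map d d' T S (X + Y) = tensor_map d d' T S X + tensor_map d d' T S Y"
  proof (rule eq_matI)
    fix p q assume "p < dim_row (tensor_map d d' T S X + tensor_map d d' T S Y)" "q < dim_col (tensor_map d d' T S X + tensor_map d d' T S Y)"
    hence pq: "p < d * d'" "q < d * d'" by (auto simp: tensor_map_def)
    have "tensor_map d d' T S (X + Y) $$ (p, q) = (\<Sum>i<d. \<Sum>j<d. \<Sum>k<d'. \<Sum>l<d'.
       X $$ (i * d' + k, j * d' + l) * mat_kron (T (mat_unit d i j)) (S (mat_unit d' k l)) $$ (p, q) +
       Y $$ (i * d' + k, j * d' + l) * mat_kron (T (mat_unit d i j)) (S (mat_unit d' k l)) $$ (p, q))"
      unfolding tensor_map_index[OF pq] using X Y idx_lt by (intro sum.cong refl) (simp add: distrib_right)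
    also have "\<dots> = (tensor_map d d' T S X + tensor_map d d' T S Y) $$ (p, q)"
      using pq by (simp add: tensor_map_index sum.distrib tensor_map_def)
    finally show "tensor_map d d' T S (X + Y) $$ (p, q) = (tensor_map d d' T S X + tensor_map d d' T S Y) $$ (p, q)" .
  qed (auto simp: tensor_map_def)
next
  fix X :: "complex mat" and c assume X: "X \<in> carrier_mat (d * d') (d * d')"
  show "tensor_map d d' T S (c \<cdot>\<^sub>m X) = c \<cdot>\<^sub>m tensor_map d d' T S X"
  proof (rule eq_matI)
    fix p q assume "p < dim_row (c \<cdot>\<^sub>m tensor_map d d' T S X)" "q < dim_col (c \<cdot>\<^sub>m tensor_map d d' T S X)"
    hence pq: "p < d * d'" "q < d * d'" by (auto simp: tensor_map_def)
    have "tensor_map d d' T S (c \<cdot>\<^sub>m X) $$ (p, q) = (\<Sum>i<d. \<Sum>j<d. \<Sum>k<d'. \<Sum>l<d'.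
       c * (X $$ (i * d' + k, j * d' + l) * mat_kron (T (mat_unit d i j)) (S (mat_unit d' k l)) $$ (p, q)))"
      unfolding tensor_map_index[OF pq] using X idx_lt by (intro sum.cong refl) simp
    also have "\<dots> = (c \<cdot>\<^sub>m tensor_map d d' T S X) $$ (p, q)"
      using pq by (simp add: tensor_map_index sum_distrib_left tensor_map_def)
    finally show "tensor_map d d' T S (c \<cdot>\<^sub>m X) $$ (p, q) = (c \<cdot>\<^sub>m tensor_map d d' T S X) $$ (p, q)" .
  qed (auto simp: tensor_map_def)
qed


lemma mat_kron_dims[simp]: "dim_row (mat_kron A B) = dim_row A * dim_row B" "dim_col (mat_kron A B) = dim_col A * dim_col B"
  unfolding mat_kron_def by auto

lemma tensor_map_kron: assumes T: "lin_map d T" and S: "lin_map d' S"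
  and A: "A \<in> carrier_mat d d" and B: "B \<in> carrier_mat d' d'"
  shows "tensor_map d d' T S (mat_kron A B) = mat_kron (T A) (S B)"
proof (rule eq_matI)
  have TA: "T A \<in> carrier_mat d d" and SB: "S B \<in> carrier_mat d' d'" using lin_mapD(1)[OF T A] lin_mapD(1)[OF S B] .
  have TE: "\<And>i j. T (mat_unit d i j) \<in> carrier_mat d d" using lin_mapD(1)[OF T] by simp
  have SE: "\<And>i j. S (mat_unit d' i j) \<in> carrier_mat d' d'" using lin_mapD(1)[OF S] by simp
  fix p q assume "p < dim_row (mat_kron (T A) (S B))" "q < dim_col (mat_kron (T A) (S B))"
  hence pq: "p < d * d'" "q < d * d'" using TA SB by auto
  note b = idx_bounds[OF pq(1)] idx_bounds[OF pq(2)]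
  have "tensor_map d d' T S (mat_kron A B) $$ (p, q) = (\<Sum>i<d. \<Sum>j<d. \<Sum>k<d'. \<Sum>l<d'.
      (A $$ (i, j) * T (mat_unit d i j) $$ (p div d', q div d')) * (B $$ (k, l) * S (mat_unit d' k l) $$ (p mod d', q mod d')))"
    unfolding tensor_map_index[OF pq]
    by (intro sum.cong refl) (simp add: mat_kron_index[OF A B idx_lt idx_lt] mat_kron_index[OF TE SE pq] idx_div_mod)
  also have "\<dots> = (\<Sum>i<d. \<Sum>j<d. A $$ (i, j) * T (mat_unit d i j) $$ (p div d', q div d')) *
      (\<Sum>k<d'. \<Sum>l<d'. B $$ (k, l) * S (mat_unit d' k l) $$ (p mod d', q mod d'))"
    (is "_ = ?P * ?Q")
  proof -
    have "?P * ?Q = (\<Sum>i<d. \<Sum>j<d. A $$ (i, j) * T (mat_unit d i j) $$ (p div d', q div d') * ?Q)"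
      by (simp only: sum_distrib_right)
    also have "\<dots> = (\<Sum>i<d. \<Sum>j<d. \<Sum>k<d'. \<Sum>l<d'.
      (A $$ (i, j) * T (mat_unit d i j) $$ (p div d', q div d')) * (B $$ (k, l) * S (mat_unit d' k l) $$ (p mod d', q mod d')))"
      by (simp only: sum_distrib_left)
    finally show ?thesis by simp
  qed
  also have "\<dots> = T A $$ (p div d', q div d') * S B $$ (p mod d', q mod d')"
    using lin_expand[OF T A b(1) b(3)] lin_expand[OF S B b(2) b(4)] by simp
  also have "\<dots> = mat_kron (T A) (S B) $$ (p, q)" using mat_kron_index[OF TA SB pq] by simp
  finally show "tensor_map d d' T S (mat_kron A B) $$ (p, q) = mat_kron (T A) (S B) $$ (p, q)" .
qed (use lin_mapD(1)[OF T A] lin_mapD(1)[OF S B] in \<open>auto simp: tensor_map_def\<close>)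

lemma kron_zero_left: assumes B: "B \<in> carrier_mat d' d'" shows "mat_kron (0\<^sub>m d d) B = 0\<^sub>m (d * d') (d * d')"
proof (rule eq_matI)
  fix p q assume "p < dim_row (0\<^sub>m (d * d') (d * d') :: complex mat)" "q < dim_col (0\<^sub>m (d * d') (d * d') :: complex mat)"
  hence pq: "p < d * d'" "q < d * d'" by auto
  show "mat_kron (0\<^sub>m d d) B $$ (p, q) = 0\<^sub>m (d * d') (d * d') $$ (p, q)"
    using mat_kron_index[OF zero_carrier_mat B pq] idx_bounds[OF pq(1)] idx_bounds[OF pq(2)] pq by simp
qed (use B in auto)

lemma kron_zero_right: assumes A: "A \<in> carrier_mat d d" shows "mat_kron A (0\<^sub>m d' d') = 0\<^sub>m (d * d') (d * d')"
proof (rule eq_matI)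
  fix p q assume "p < dim_row (0\<^sub>m (d * d') (d * d') :: complex mat)" "q < dim_col (0\<^sub>m (d * d') (d * d') :: complex mat)"
  hence pq: "p < d * d'" "q < d * d'" by auto
  show "mat_kron A (0\<^sub>m d' d') $$ (p, q) = 0\<^sub>m (d * d') (d * d') $$ (p, q)"
    using mat_kron_index[OF A zero_carrier_mat pq] idx_bounds[OF pq(1)] idx_bounds[OF pq(2)] pq by simp
qed (use A in auto)

lemma phi_pow_carrier': assumes L: "lin_map n L" shows "Y \<in> carrier_mat n n \<Longrightarrow> ((\<lambda>Y. L Y - c \<cdot>\<^sub>m Y) ^^ k) Y \<in> carrier_mat n n"
proof (induction k)
  case (Suc k)
  have "L (((\<lambda>Y. L Y - c \<cdot>\<^sub>m Y) ^^ k) Y) \<in> carrier_mat n n" using lin_mapD(1)[OF L Suc(1)[OF Suc(2)]] .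
  thus ?case using Suc by simp
qed simp

lemma phi_lin: assumes L: "lin_map n L" shows "lin_map n (\<lambda>Y. L Y - c \<cdot>\<^sub>m Y)"
  unfolding lin_map_def
proof (intro conjI ballI allI)
  fix X :: "complex mat" assume X: "X \<in> carrier_mat n n"
  show "L X - c \<cdot>\<^sub>m X \<in> carrier_mat n n" using lin_mapD(1)[OF L X] X by simp
next
  fix X Y :: "complex mat" assume X: "X \<in> carrier_mat n n" and Y: "Y \<in> carrier_mat n n"
  show "L (X + Y) - c \<cdot>\<^sub>m (X + Y) = L X - c \<cdot>\<^sub>m X + (L Y - c \<cdot>\<^sub>m Y)"
    unfolding lin_mapD(2)[OF L X Y] using lin_mapD(1)[OF L X] lin_mapD(1)[OF L Y] X Y
    by (intro eq_matI) (auto simp: algebra_simps)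
next
  fix X :: "complex mat" and a assume X: "X \<in> carrier_mat n n"
  show "L (a \<cdot>\<^sub>m X) - c \<cdot>\<^sub>m (a \<cdot>\<^sub>m X) = a \<cdot>\<^sub>m (L X - c \<cdot>\<^sub>m X)"
    unfolding lin_mapD(3)[OF L X] using lin_mapD(1)[OF L X] X
    by (intro eq_matI) (auto simp: algebra_simps)
qed

lemma funpow_zero: assumes L: "lin_map n L" shows "(L ^^ k) (0\<^sub>m n n) = 0\<^sub>m n n"
  by (induction k) (auto simp: lin_zero[OF L])

lemma subsp_preimage: assumes L: "lin_map n L" and V: "subsp n V"
  shows "subsp n {Y \<in> carrier_mat n n. L Y \<in> V}"
  unfolding subsp_def using lin_mapD[OF L] lin_zero[OF L] subspD[OF V] by auto

lemma phi_kron: assumes T: "lin_map d T" and S: "lin_map d' S"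
  and X: "X \<in> carrier_mat d d" and Y: "Y \<in> carrier_mat d' d'"
  shows "tensor_map d d' T S (mat_kron X Y) - (c * e) \<cdot>\<^sub>m mat_kron X Y
    = mat_kron (T X - c \<cdot>\<^sub>m X) (S Y - e \<cdot>\<^sub>m Y) + e \<cdot>\<^sub>m mat_kron (T X - c \<cdot>\<^sub>m X) Y + c \<cdot>\<^sub>m mat_kron X (S Y - e \<cdot>\<^sub>m Y)"
proof -
  have TX: "T X \<in> carrier_mat d d" and SY: "S Y \<in> carrier_mat d' d'" using lin_mapD(1)[OF T X] lin_mapD(1)[OF S Y] .
  have U: "T X - c \<cdot>\<^sub>m X \<in> carrier_mat d d" and W: "S Y - e \<cdot>\<^sub>m Y \<in> carrier_mat d' d'" using TX SY X Y by auto
  show ?thesis unfolding tensor_map_kron[OF T S X Y]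
  proof (rule eq_matI)
    fix p q assume "p < dim_row (mat_kron (T X - c \<cdot>\<^sub>m X) (S Y - e \<cdot>\<^sub>m Y) + e \<cdot>\<^sub>m mat_kron (T X - c \<cdot>\<^sub>m X) Y + c \<cdot>\<^sub>m mat_kron X (S Y - e \<cdot>\<^sub>m Y))"
      "q < dim_col (mat_kron (T X - c \<cdot>\<^sub>m X) (S Y - e \<cdot>\<^sub>m Y) + e \<cdot>\<^sub>m mat_kron (T X - c \<cdot>\<^sub>m X) Y + c \<cdot>\<^sub>m mat_kron X (S Y - e \<cdot>\<^sub>m Y))"
    hence pq: "p < d * d'" "q < d * d'" using carrier_matD[OF X] carrier_matD[OF Y] by auto
    note b = idx_bounds[OF pq(1)] idx_bounds[OF pq(2)]
    show "(mat_kron (T X) (S Y) - (c * e) \<cdot>\<^sub>m mat_kron X Y) $$ (p, q) =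
      (mat_kron (T X - c \<cdot>\<^sub>m X) (S Y - e \<cdot>\<^sub>m Y) + e \<cdot>\<^sub>m mat_kron (T X - c \<cdot>\<^sub>m X) Y + c \<cdot>\<^sub>m mat_kron X (S Y - e \<cdot>\<^sub>m Y)) $$ (p, q)"
      using pq b TX SY X Y U W
      by (simp add: mat_kron_index[OF TX SY pq] mat_kron_index[OF X Y pq] mat_kron_index[OF U W pq]
          mat_kron_index[OF U Y pq] mat_kron_index[OF X W pq] algebra_simps)
  qed (use TX SY X Y U W in auto)
qed

lemma arith_dd: fixes d d' i j :: nat assumes "0 < d" "0 < d'" "(d * d') * (d * d') \<le> i + j"
  shows "d * d \<le> i \<or> d' * d' \<le> j"
proof (rule ccontr)
  assume "\<not> ?thesis"
  hence ij: "i < d * d" "j < d' * d'" by auto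
  obtain a b where a: "d * d = Suc a" and b: "d' * d' = Suc b" using assms(1,2)
    by (metis gr0_implies_Suc nat_0_less_mult_iff)
  have "(d * d') * (d * d') = (d * d) * (d' * d')" by (simp add: ac_simps)
  also have "\<dots> = a * b + a + b + 1" unfolding a b by simp
  finally have "(d * d') * (d * d') = a * b + a + b + 1" .
  moreover have "i + j \<le> a + b" using ij a b by simp
  ultimately show False using assms(3) by simp
qed

lemma gen_kron: assumes T: "lin_map d T" and S: "lin_map d' S" and d: "0 < d" "0 < d'"
  and A: "A \<in> gen_eigenspace d T c" and B: "B \<in> gen_eigenspace d' S e"
  shows "mat_kron A B \<in> gen_eigenspace (d * d') (tensor_map d d' T S) (c * e)"
proof -
  define U where "U = (\<lambda>Y. T Y - c \<cdot>\<^sub>m Y)"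
  define W where "W = (\<lambda>Y. S Y - e \<cdot>\<^sub>m Y)"
  define P where "P = (\<lambda>Y. tensor_map d d' T S Y - (c * e) \<cdot>\<^sub>m Y)"
  define G where "G m = {mat_kron ((U ^^ i) A) ((W ^^ j) B) | i j. m \<le> i + j}" for m
  have AC: "A \<in> carrier_mat d d" and AU: "(U ^^ (d * d)) A = 0\<^sub>m d d" using A unfolding gen_eigenspace_def U_def by auto
  have BC: "B \<in> carrier_mat d' d'" and BW: "(W ^^ (d' * d')) B = 0\<^sub>m d' d'" using B unfolding gen_eigenspace_def W_def by auto
  have UC: "\<And>i. (U ^^ i) A \<in> carrier_mat d d" unfolding U_def by (rule phi_pow_carrier'[OF T AC])
  have WC: "\<And>j. (W ^^ j) B \<in> carrier_mat d' d'" unfolding W_def by (rule phi_pow_carrier'[OF S BC])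
  have GC: "G m \<subseteq> carrier_mat (d * d') (d * d')" for m unfolding G_def using UC WC mat_kron_carrier by blast
  have Plin: "lin_map (d * d') P" unfolding P_def by (rule phi_lin[OF tensor_map_lin])
  have step: "P Y \<in> mat_span (d * d') (G (Suc m))" if Y: "Y \<in> G m" for Y m
  proof -
    from Y obtain i j where ij: "m \<le> i + j" "Y = mat_kron ((U ^^ i) A) ((W ^^ j) B)" unfolding G_def by blast
    have "P Y = mat_kron ((U ^^ Suc i) A) ((W ^^ Suc j) B) + e \<cdot>\<^sub>m mat_kron ((U ^^ Suc i) A) ((W ^^ j) B)
        + c \<cdot>\<^sub>m mat_kron ((U ^^ i) A) ((W ^^ Suc j) B)"
      unfolding ij(2) P_def using phi_kron[OF T S UC WC] by (simp add: U_def W_def)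
    moreover have "mat_kron ((U ^^ Suc i) A) ((W ^^ Suc j) B) \<in> mat_span (d * d') (G (Suc m))"
    proof (rule span_in)
      show "mat_kron ((U ^^ Suc i) A) ((W ^^ Suc j) B) \<in> G (Suc m)" unfolding G_def
        by (rule CollectI, rule exI[of _ "Suc i"], rule exI[of _ "Suc j"]) (use ij in simp)
      show "mat_kron ((U ^^ Suc i) A) ((W ^^ Suc j) B) \<in> carrier_mat (d * d') (d * d')" by (rule mat_kron_carrier[OF UC WC])
    qed
    moreover have "mat_kron ((U ^^ Suc i) A) ((W ^^ j) B) \<in> mat_span (d * d') (G (Suc m))"
    proof (rule span_in)
      show "mat_kron ((U ^^ Suc i) A) ((W ^^ j) B) \<in> G (Suc m)" unfolding G_def
        by (rule CollectI, rule exI[of _ "Suc i"], rule exI[of _ j]) (use ij in simp)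
      show "mat_kron ((U ^^ Suc i) A) ((W ^^ j) B) \<in> carrier_mat (d * d') (d * d')" by (rule mat_kron_carrier[OF UC WC])
    qed
    moreover have "mat_kron ((U ^^ i) A) ((W ^^ Suc j) B) \<in> mat_span (d * d') (G (Suc m))"
    proof (rule span_in)
      show "mat_kron ((U ^^ i) A) ((W ^^ Suc j) B) \<in> G (Suc m)" unfolding G_def
        by (rule CollectI, rule exI[of _ i], rule exI[of _ "Suc j"]) (use ij in simp)
      show "mat_kron ((U ^^ i) A) ((W ^^ Suc j) B) \<in> carrier_mat (d * d') (d * d')" by (rule mat_kron_carrier[OF UC WC])
    qed
    ultimately show ?thesis using subspD(3,4)[OF subsp_span] by metis
  qed
  have main: "(P ^^ m) (mat_kron A B) \<in> mat_span (d * d') (G m)" for m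
  proof (induction m)
    case 0
    have "mat_kron A B \<in> G 0" unfolding G_def by (auto intro!: exI[of _ 0])
    thus ?case using AC BC mat_kron_carrier by (auto intro: span_in)
  next
    case (Suc m)
    have "mat_span (d * d') (G m) \<subseteq> {Y \<in> carrier_mat (d * d') (d * d'). P Y \<in> mat_span (d * d') (G (Suc m))}"
      by (rule span_sub[OF subsp_preimage[OF Plin subsp_span]]) (use step GC in blast)
    thus ?case using Suc by auto
  qed
  have Uz: "(U ^^ i) A = 0\<^sub>m d d" if i: "d * d \<le> i" for i
  proof -
    obtain k where k: "i = k + d * d" using i le_Suc_ex by (metis add.commute)
    have "(U ^^ i) A = (U ^^ (i - d * d)) ((U ^^ (d * d)) A)" unfolding k by (simp add: funpow_add)
    also have "\<dots> = (U ^^ (i - d * d)) (0\<^sub>m d d)" using AU by simp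
    also have "\<dots> = 0\<^sub>m d d" unfolding U_def by (rule funpow_zero[OF phi_lin[OF T]])
    finally show ?thesis .
  qed
  have Wz: "(W ^^ j) B = 0\<^sub>m d' d'" if j: "d' * d' \<le> j" for j
  proof -
    obtain k where k: "j = k + d' * d'" using j le_Suc_ex by (metis add.commute)
    have "(W ^^ j) B = (W ^^ (j - d' * d')) ((W ^^ (d' * d')) B)" unfolding k by (simp add: funpow_add)
    also have "\<dots> = (W ^^ (j - d' * d')) (0\<^sub>m d' d')" using BW by simp
    also have "\<dots> = 0\<^sub>m d' d'" unfolding W_def by (rule funpow_zero[OF phi_lin[OF S]])
    finally show ?thesis .
  qed
  have "G ((d * d') * (d * d')) \<subseteq> {0\<^sub>m (d * d') (d * d')}"
  proof
    fix Y assume "Y \<in> G ((d * d') * (d * d'))"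
    then obtain i j where ij: "(d * d') * (d * d') \<le> i + j" "Y = mat_kron ((U ^^ i) A) ((W ^^ j) B)" unfolding G_def by blast
    from arith_dd[OF d ij(1)] show "Y \<in> {0\<^sub>m (d * d') (d * d')}"
      using Uz Wz ij(2) kron_zero_left[OF WC] kron_zero_right[OF UC] by auto
  qed
  hence "mat_span (d * d') (G ((d * d') * (d * d'))) \<subseteq> {0\<^sub>m (d * d') (d * d')}"
    by (rule span_sub[OF subsp_zero])
  hence "(P ^^ ((d * d') * (d * d'))) (mat_kron A B) = 0\<^sub>m (d * d') (d * d')" using main by blast
  thus ?thesis unfolding gen_eigenspace_def P_def using mat_kron_carrier[OF AC BC] by simp
qed


lemma prod_kills: assumes L: "lin_map n L" and D: "finite D" "\<mu> \<in> D" and Z: "Z \<in> gen_eigenspace n L \<mu>"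
  shows "pev n L (\<Prod>c\<in>D. [:-c, 1:] ^ (n * n)) Z = 0\<^sub>m n n"
proof -
  have ZC: "Z \<in> carrier_mat n n" using Z by (rule gen_carrier)
  have "(\<Prod>c\<in>D. [:-c, 1:] ^ (n * n)) = (\<Prod>c\<in>D - {\<mu>}. [:-c, 1:] ^ (n * n)) * [:-\<mu>, 1:] ^ (n * n)"
    using D by (subst prod.remove[of _ \<mu>]) (auto simp: mult.commute)
  hence "pev n L (\<Prod>c\<in>D. [:-c, 1:] ^ (n * n)) Z = pev n L (\<Prod>c\<in>D - {\<mu>}. [:-c, 1:] ^ (n * n)) (pev n L ([:-\<mu>, 1:] ^ (n * n)) Z)"
    using pev_mult[OF L ZC] by simp
  also have "pev n L ([:-\<mu>, 1:] ^ (n * n)) Z = 0\<^sub>m n n" using Z unfolding gen_eigenspace_pev[OF L] by auto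
  finally show ?thesis by (simp add: pev_zero_arg[OF L])
qed

lemma pp_exists: assumes L: "lin_map n L"
  shows "\<exists>Q. lin_map n Q \<and>
    (\<forall>X. X \<in> carrier_mat n n \<longrightarrow> (\<exists>(I :: (complex \<times> complex) set) g \<nu>. finite I \<and>
              (\<forall>i\<in>I. g i \<in> gen_eigenspace n L (\<nu> i)) \<and> X = msum n g I)) \<and>
    (\<forall>\<mu> Z. cmod \<mu> = 1 \<longrightarrow> Z \<in> gen_eigenspace n L \<mu> \<longrightarrow> Q Z = Z) \<and>
    (\<forall>\<mu> Z. cmod \<mu> \<noteq> 1 \<longrightarrow> Z \<in> gen_eigenspace n L \<mu> \<longrightarrow> Q Z = 0\<^sub>m n n)"
proof -
  obtain C k where C: "finite C" "\<forall>c\<in>C. k c \<le> n * n"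
    "\<forall>X\<in>carrier_mat n n. pev n L (\<Prod>c\<in>C. [:-c, 1:] ^ k c) X = 0\<^sub>m n n"
    using annihilator[OF L] by blast
  define C1 where "C1 = {c\<in>C. cmod c = 1}"
  define C2 where "C2 = {c\<in>C. cmod c \<noteq> 1}"
  define p1 where "p1 = (\<Prod>c\<in>C1. [:-c, 1:] ^ (n * n))"
  define p2 where "p2 = (\<Prod>c\<in>C2. [:-c, 1:] ^ (n * n))"
  have cp: "coprime p1 p2" unfolding p1_def p2_def by (rule coprime_prod_prod) (auto simp: C1_def C2_def)
  obtain a b where ab: "a * p1 + b * p2 = 1" using bezout_poly[OF L cp] by blast
  define Q where "Q = pev n L (b * p2)"
  have fin: "finite C1" "finite C2" using C(1) unfolding C1_def C2_def by auto
  have notC: "Z = 0\<^sub>m n n" if Z: "Z \<in> gen_eigenspace n L \<mu>" and mu: "\<mu> \<notin> C" for Z \<mu>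
  proof -
    have ZC: "Z \<in> carrier_mat n n" using Z by (rule gen_carrier)
    have cp: "coprime ([:-\<mu>, 1:] ^ (n * n)) (\<Prod>c\<in>C. [:-c, 1:] ^ k c)" by (rule coprime_lin_power_prod[OF mu])
    show ?thesis by (rule ker_coprime[OF L cp ZC]) (use Z C(3) ZC in \<open>auto simp: gen_eigenspace_pev[OF L]\<close>)
  qed
  have Q0: "Q (0\<^sub>m n n) = 0\<^sub>m n n" unfolding Q_def by (rule pev_zero_arg[OF L])
  show ?thesis
  proof (intro exI[of _ Q] conjI allI impI)
    show "lin_map n Q" unfolding Q_def by (rule pev_lin_map[OF L])
  next
    fix X :: "complex mat" assume X: "X \<in> carrier_mat n n"
    obtain f where f: "\<forall>c\<in>C. f c \<in> carrier_mat n n \<and> pev n L ([:-c, 1:] ^ k c) (f c) = 0\<^sub>m n n" "X = msum n f C"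
      using span_decomp[OF L C(1) X] C(3) X by blast
    have fg: "f c \<in> gen_eigenspace n L c" if c: "c \<in> C" for c
    proof -
      have e: "[:-c, 1:] ^ (n * n) = [:-c, 1:] ^ (n * n - k c) * [:-c, 1:] ^ k c"
        using C(2) c by (simp add: power_add[symmetric])
      have "pev n L ([:-c, 1:] ^ (n * n)) (f c) = 0\<^sub>m n n"
        unfolding e using f(1) c by (simp add: pev_mult[OF L] pev_zero_arg[OF L])
      thus ?thesis unfolding gen_eigenspace_pev[OF L] using f(1) c by auto
    qed
    have CC: "C \<times> {0::complex} = (\<lambda>c. (c, 0::complex)) ` C" by auto
    have inj: "inj_on (\<lambda>c. (c, 0::complex)) C" by (auto simp: inj_on_def)
    have "msum n (\<lambda>x. f (fst x)) (C \<times> {0::complex}) = msum n f C"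
    proof -
      have "(\<Sum>x\<in>C \<times> {0::complex}. f (fst x) $$ (i, j)) = (\<Sum>c\<in>C. f c $$ (i, j))" for i j
      proof -
        have "(\<Sum>x\<in>C \<times> {0::complex}. f (fst x) $$ (i, j)) = (\<Sum>x\<in>(\<lambda>c. (c, 0::complex)) ` C. f (fst x) $$ (i, j))"
          by (subst CC) (rule refl)
        also have "\<dots> = (\<Sum>c\<in>C. f c $$ (i, j))" by (subst sum.reindex[OF inj]) simp
        finally show ?thesis .
      qed
      thus ?thesis unfolding msum_def by simp
    qed
    thus "\<exists>(I :: (complex \<times> complex) set) g \<nu>. finite I \<and> (\<forall>i\<in>I. g i \<in> gen_eigenspace n L (\<nu> i)) \<and> X = msum n g I"
      using f(2) fg C(1) by (intro exI[of _ "C \<times> {0::complex}"] exI[of _ "\<lambda>x. f (fst x)"] exI[of _ fst]) auto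
  next
    fix \<mu> Z assume mu: "cmod \<mu> = 1" and Z: "Z \<in> gen_eigenspace n L \<mu>"
    have ZC: "Z \<in> carrier_mat n n" using Z by (rule gen_carrier)
    show "Q Z = Z"
    proof (cases "\<mu> \<in> C")
      case True
      hence "\<mu> \<in> C1" using mu unfolding C1_def by auto
      hence z1: "pev n L p1 Z = 0\<^sub>m n n" unfolding p1_def by (rule prod_kills[OF L fin(1) _ Z])
      have "Z = pev n L (a * p1 + b * p2) Z" using pev_one[OF L ZC] ab by simp
      also have "\<dots> = Q Z" unfolding Q_def using ZC z1 by (simp add: pev_add[OF L] pev_mult[OF L] pev_zero_arg[OF L] pev_carrier[OF L])
      finally show ?thesis by simp
    next
      case False thus ?thesis using notC[OF Z] Q0 by simp
    qed
  next
    fix \<mu> Z assume mu: "cmod \<mu> \<noteq> 1" and Z: "Z \<in> gen_eigenspace n L \<mu>"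
    have ZC: "Z \<in> carrier_mat n n" using Z by (rule gen_carrier)
    show "Q Z = 0\<^sub>m n n"
    proof (cases "\<mu> \<in> C")
      case True
      hence "\<mu> \<in> C2" using mu unfolding C2_def by auto
      hence z2: "pev n L p2 Z = 0\<^sub>m n n" unfolding p2_def by (rule prod_kills[OF L fin(2) _ Z])
      show ?thesis unfolding Q_def using ZC z2 by (simp add: pev_mult[OF L] pev_zero_arg[OF L])
    next
      case False thus ?thesis using notC[OF Z] Q0 by simp
    qed
  qed
qed


context fixes n L assumes L: "lin_map n L"
begin

definition "PQ = (SOME Q. lin_map n Q \<and>
    (\<forall>X. X \<in> carrier_mat n n \<longrightarrow> (\<exists>(I :: (complex \<times> complex) set) g \<nu>. finite I \<and>
              (\<forall>i\<in>I. g i \<in> gen_eigenspace n L (\<nu> i)) \<and> X = msum n g I)) \<and>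
    (\<forall>\<mu> Z. cmod \<mu> = 1 \<longrightarrow> Z \<in> gen_eigenspace n L \<mu> \<longrightarrow> Q Z = Z) \<and>
    (\<forall>\<mu> Z. cmod \<mu> \<noteq> 1 \<longrightarrow> Z \<in> gen_eigenspace n L \<mu> \<longrightarrow> Q Z = 0\<^sub>m n n))"

lemma PQ_all: "lin_map n PQ \<and>
    (\<forall>X. X \<in> carrier_mat n n \<longrightarrow> (\<exists>(I :: (complex \<times> complex) set) g \<nu>. finite I \<and>
              (\<forall>i\<in>I. g i \<in> gen_eigenspace n L (\<nu> i)) \<and> X = msum n g I)) \<and>
    (\<forall>\<mu> Z. cmod \<mu> = 1 \<longrightarrow> Z \<in> gen_eigenspace n L \<mu> \<longrightarrow> PQ Z = Z) \<and>
    (\<forall>\<mu> Z. cmod \<mu> \<noteq> 1 \<longrightarrow> Z \<in> gen_eigenspace n L \<mu> \<longrightarrow> PQ Z = 0\<^sub>m n n)"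
  unfolding PQ_def by (rule someI_ex[OF pp_exists[OF L]])

lemmas PQ_lin = PQ_all[THEN conjunct1]
lemmas PQ_spn = PQ_all[THEN conjunct2, THEN conjunct1, rule_format]
lemmas PQ_fix = PQ_all[THEN conjunct2, THEN conjunct2, THEN conjunct1, rule_format]
lemmas PQ_kill = PQ_all[THEN conjunct2, THEN conjunct2, THEN conjunct2, rule_format]

lemma pp_PQ: "X \<in> carrier_mat n n \<Longrightarrow> peripheral_projection n L X = PQ X"
  by (rule pp_eq[OF L PQ_lin PQ_spn PQ_fix PQ_kill])

lemma pp_lin: "lin_map n (peripheral_projection n L)"
  unfolding lin_map_def
proof (intro conjI ballI allI)
  fix X :: "complex mat" assume X: "X \<in> carrier_mat n n"
  show "peripheral_projection n L X \<in> carrier_mat n n" using pp_PQ[OF X] lin_mapD(1)[OF PQ_lin X] by simp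
next
  fix X Y :: "complex mat" assume X: "X \<in> carrier_mat n n" and Y: "Y \<in> carrier_mat n n"
  show "peripheral_projection n L (X + Y) = peripheral_projection n L X + peripheral_projection n L Y"
    using pp_PQ[OF X] pp_PQ[OF Y] pp_PQ[of "X + Y"] X Y lin_mapD(2)[OF PQ_lin X Y] by simp
next
  fix X :: "complex mat" and c assume X: "X \<in> carrier_mat n n"
  show "peripheral_projection n L (c \<cdot>\<^sub>m X) = c \<cdot>\<^sub>m peripheral_projection n L X"
    using pp_PQ[OF X] pp_PQ[of "c \<cdot>\<^sub>m X"] X lin_mapD(3)[OF PQ_lin X] by simp
qed

lemma pp_fix: assumes "cmod \<mu> = 1" "Z \<in> gen_eigenspace n L \<mu>" shows "peripheral_projection n L Z = Z"
  using pp_PQ[OF gen_carrier[OF assms(2)]] PQ_fix[OF assms] by simp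

lemma pp_kill: assumes "cmod \<mu> \<noteq> 1" "Z \<in> gen_eigenspace n L \<mu>" shows "peripheral_projection n L Z = 0\<^sub>m n n"
  using pp_PQ[OF gen_carrier[OF assms(2)]] PQ_kill[OF assms] by simp

lemma pp_range: assumes X: "X \<in> carrier_mat n n"
  shows "peripheral_projection n L X \<in> mat_span n (\<Union>c\<in>{c. cmod c = 1}. gen_eigenspace n L c)"
proof -
  have "PQ X \<in> PQ ` carrier_mat n n" using X by simp
  also have "PQ ` carrier_mat n n = Rsp n L" by (rule Q_range[OF L PQ_lin PQ_spn PQ_fix PQ_kill])
  finally show ?thesis using pp_PQ[OF X] by (simp add: Rsp_def[OF L])
qed

end


definition IDX :: "nat \<Rightarrow> nat \<Rightarrow> ((nat \<times> nat) \<times> (nat \<times> nat)) set" where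
  "IDX d d' = ({..<d} \<times> {..<d}) \<times> ({..<d'} \<times> {..<d'})"

lemma IDX_finite[simp]: "finite (IDX d d')" unfolding IDX_def by simp

definition tmt :: "nat \<Rightarrow> nat \<Rightarrow> (complex mat \<Rightarrow> complex mat) \<Rightarrow> (complex mat \<Rightarrow> complex mat) \<Rightarrow> complex mat
   \<Rightarrow> (nat \<times> nat) \<times> (nat \<times> nat) \<Rightarrow> complex mat" where
  "tmt d d' T S X y = X $$ (fst (fst y) * d' + fst (snd y), snd (fst y) * d' + snd (snd y)) \<cdot>\<^sub>m
     mat_kron (T (mat_unit d (fst (fst y)) (snd (fst y)))) (S (mat_unit d' (fst (snd y)) (snd (snd y))))"

lemma tensor_map_index': assumes pq: "p < d * d'" "q < d * d'"
  shows "tensor_map d d' T S X $$ (p, q) = (\<Sum>y\<in>IDX d d'.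
     X $$ (fst (fst y) * d' + fst (snd y), snd (fst y) * d' + snd (snd y)) *
     mat_kron (T (mat_unit d (fst (fst y)) (snd (fst y)))) (S (mat_unit d' (fst (snd y)) (snd (snd y)))) $$ (p, q))"
  unfolding tensor_map_index[OF pq] IDX_def lessThan_def[symmetric] by (rule sum4_prod)

lemma tensor_map_msum: assumes TE: "\<And>i j. i < d \<Longrightarrow> j < d \<Longrightarrow> T (mat_unit d i j) \<in> carrier_mat d d"
  and SE: "\<And>i j. i < d' \<Longrightarrow> j < d' \<Longrightarrow> S (mat_unit d' i j) \<in> carrier_mat d' d'"
  shows "tensor_map d d' T S X = msum (d * d') (tmt d d' T S X) (IDX d d')"
proof (rule eq_matI)
  fix p q assume "p < dim_row (msum (d * d') (tmt d d' T S X) (IDX d d'))" "q < dim_col (msum (d * d') (tmt d d' T S X) (IDX d d'))"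
  hence pq: "p < d * d'" "q < d * d'" by auto
  show "tensor_map d d' T S X $$ (p, q) = msum (d * d') (tmt d d' T S X) (IDX d d') $$ (p, q)"
    unfolding tensor_map_index'[OF pq] msum_index[OF pq]
  proof (rule sum.cong[OF refl])
    fix y assume y: "y \<in> IDX d d'"
    have "mat_kron (T (mat_unit d (fst (fst y)) (snd (fst y)))) (S (mat_unit d' (fst (snd y)) (snd (snd y)))) \<in> carrier_mat (d * d') (d * d')"
      using y TE SE unfolding IDX_def by (intro mat_kron_carrier) auto
    note dd = carrier_matD[OF this]
    show "X $$ (fst (fst y) * d' + fst (snd y), snd (fst y) * d' + snd (snd y)) *
     mat_kron (T (mat_unit d (fst (fst y)) (snd (fst y)))) (S (mat_unit d' (fst (snd y)) (snd (snd y)))) $$ (p, q)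
      = tmt d d' T S X y $$ (p, q)" unfolding tmt_def using pq dd by simp
  qed
qed (auto simp: tensor_map_def)

lemma tensor_map_cong: assumes "\<And>i j. i < d \<Longrightarrow> j < d \<Longrightarrow> T1 (mat_unit d i j) = T2 (mat_unit d i j)"
  and "\<And>i j. i < d' \<Longrightarrow> j < d' \<Longrightarrow> S1 (mat_unit d' i j) = S2 (mat_unit d' i j)"
  shows "tensor_map d d' T1 S1 X = tensor_map d d' T2 S2 X"
  unfolding tensor_map_def using assms by (intro cong_mat refl) (auto intro!: sum.cong)

lemma sum_delta_if: fixes b n :: nat shows "b < n \<Longrightarrow> (\<Sum>l<n. if P \<and> l = b then z else 0) = (if P then z else (0::complex))"
  by (cases P) auto

lemma tensor_map_id: assumes Z: "Z \<in> carrier_mat (d * d') (d * d')"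
  shows "tensor_map d d' id id Z = Z"
proof (rule eq_matI)
  fix p q assume "p < dim_row Z" "q < dim_col Z"
  hence pq: "p < d * d'" "q < d * d'" using Z by auto
  note b = idx_bounds[OF pq(1)] idx_bounds[OF pq(2)]
  have "tensor_map d d' id id Z $$ (p, q) = (\<Sum>i<d. \<Sum>j<d. \<Sum>k<d'. \<Sum>l<d'.
     (if (((True \<and> i = p div d') \<and> j = q div d') \<and> k = p mod d') \<and> l = q mod d' then Z $$ (p, q) else 0))"
    unfolding tensor_map_index[OF pq]
  proof (intro sum.cong refl)
    fix i j k l assume ijkl: "i \<in> {..<d}" "j \<in> {..<d}" "k \<in> {..<d'}" "l \<in> {..<d'}"
    have pe: "p = p div d' * d' + p mod d'" and qe: "q = q div d' * d' + q mod d'" by simp_all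
    show "Z $$ (i * d' + k, j * d' + l) * mat_kron (id (mat_unit d i j)) (id (mat_unit d' k l)) $$ (p, q) =
      (if (((True \<and> i = p div d') \<and> j = q div d') \<and> k = p mod d') \<and> l = q mod d' then Z $$ (p, q) else 0)"
      using b pe qe by (auto simp: mat_kron_index[OF mat_unit_carrier mat_unit_carrier pq] mat_unit_index)
  qed
  also have "\<dots> = Z $$ (p, q)" by (simp only: sum_delta_if[OF b(4)] sum_delta_if[OF b(2)] sum_delta_if[OF b(3)] sum_delta_if[OF b(1)] if_True)
  finally show "tensor_map d d' id id Z $$ (p, q) = Z $$ (p, q)" .
qed (use Z in \<open>auto simp: tensor_map_def\<close>)

lemma prod_sums: "(\<Sum>c\<in>C. a c) * (\<Sum>e\<in>K. b e) = (\<Sum>x\<in>C \<times> K. a (fst x) * b (snd x) :: complex)"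
  unfolding sum_product sum.cartesian_product by (simp add: split_def)

lemma tensor_map_sum: assumes C: "finite C" and K: "finite K"
  and F: "\<And>i j c. i < d \<Longrightarrow> j < d \<Longrightarrow> F (mat_unit d i j) c \<in> carrier_mat d d"
  and G: "\<And>i j c. i < d' \<Longrightarrow> j < d' \<Longrightarrow> G (mat_unit d' i j) c \<in> carrier_mat d' d'"
  shows "tensor_map d d' (\<lambda>E. msum d (F E) C) (\<lambda>E. msum d' (G E) K) Z
     = msum (d * d') (\<lambda>x. tensor_map d d' (\<lambda>E. F E (fst x)) (\<lambda>E. G E (snd x)) Z) (C \<times> K)"
proof (rule eq_matI)
  fix p q assume "p < dim_row (msum (d * d') (\<lambda>x. tensor_map d d' (\<lambda>E. F E (fst x)) (\<lambda>E. G E (snd x)) Z) (C \<times> K))"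
    "q < dim_col (msum (d * d') (\<lambda>x. tensor_map d d' (\<lambda>E. F E (fst x)) (\<lambda>E. G E (snd x)) Z) (C \<times> K))"
  hence pq: "p < d * d'" "q < d * d'" by auto
  note b = idx_bounds[OF pq(1)] idx_bounds[OF pq(2)]
  define zz where "zz y = Z $$ (fst (fst y) * d' + fst (snd y), snd (fst y) * d' + snd (snd y))" for y :: "(nat \<times> nat) \<times> (nat \<times> nat)"
  define Fy where "Fy y c = F (mat_unit d (fst (fst y)) (snd (fst y))) c $$ (p div d', q div d')" for y :: "(nat \<times> nat) \<times> (nat \<times> nat)" and c
  define Gy where "Gy y c = G (mat_unit d' (fst (snd y)) (snd (snd y))) c $$ (p mod d', q mod d')" for y :: "(nat \<times> nat) \<times> (nat \<times> nat)" and c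
  have FC: "\<And>y c. y \<in> IDX d d' \<Longrightarrow> F (mat_unit d (fst (fst y)) (snd (fst y))) c \<in> carrier_mat d d"
    using F unfolding IDX_def by auto
  have GC: "\<And>y c. y \<in> IDX d d' \<Longrightarrow> G (mat_unit d' (fst (snd y)) (snd (snd y))) c \<in> carrier_mat d' d'"
    using G unfolding IDX_def by auto
  have "tensor_map d d' (\<lambda>E. msum d (F E) C) (\<lambda>E. msum d' (G E) K) Z $$ (p, q)
     = (\<Sum>y\<in>IDX d d'. zz y * ((\<Sum>c\<in>C. Fy y c) * (\<Sum>e\<in>K. Gy y e)))"
    unfolding tensor_map_index'[OF pq]
  proof (rule sum.cong[OF refl])
    fix y assume y: "y \<in> IDX d d'"
    show "Z $$ (fst (fst y) * d' + fst (snd y), snd (fst y) * d' + snd (snd y)) *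
        mat_kron (msum d (F (mat_unit d (fst (fst y)) (snd (fst y)))) C) (msum d' (G (mat_unit d' (fst (snd y)) (snd (snd y)))) K) $$ (p, q)
       = zz y * ((\<Sum>c\<in>C. Fy y c) * (\<Sum>e\<in>K. Gy y e))"
      unfolding zz_def Fy_def Gy_def
      using b by (simp add: mat_kron_index[OF msum_carrier msum_carrier pq] msum_index)
  qed
  also have "\<dots> = (\<Sum>y\<in>IDX d d'. \<Sum>x\<in>C \<times> K. zz y * (Fy y (fst x) * Gy y (snd x)))"
    by (intro sum.cong refl) (unfold prod_sums, rule sum_distrib_left)
  also have "\<dots> = (\<Sum>x\<in>C \<times> K. \<Sum>y\<in>IDX d d'. zz y * (Fy y (fst x) * Gy y (snd x)))"
    by (rule sum.swap)
  also have "\<dots> = msum (d * d') (\<lambda>x. tensor_map d d' (\<lambda>E. F E (fst x)) (\<lambda>E. G E (snd x)) Z) (C \<times> K) $$ (p, q)"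
    unfolding msum_index[OF pq]
  proof (rule sum.cong[OF refl])
    fix x assume "x \<in> C \<times> K"
    show "(\<Sum>y\<in>IDX d d'. zz y * (Fy y (fst x) * Gy y (snd x))) = tensor_map d d' (\<lambda>E. F E (fst x)) (\<lambda>E. G E (snd x)) Z $$ (p, q)"
      unfolding tensor_map_index'[OF pq]
    proof (rule sum.cong[OF refl])
      fix y assume y: "y \<in> IDX d d'"
      show "zz y * (Fy y (fst x) * Gy y (snd x)) = Z $$ (fst (fst y) * d' + fst (snd y), snd (fst y) * d' + snd (snd y)) *
        mat_kron (F (mat_unit d (fst (fst y)) (snd (fst y))) (fst x)) (G (mat_unit d' (fst (snd y)) (snd (snd y))) (snd x)) $$ (p, q)"
        unfolding zz_def Fy_def Gy_def using mat_kron_index[OF FC[OF y] GC[OF y] pq] by simp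
    qed
  qed
  finally show "tensor_map d d' (\<lambda>E. msum d (F E) C) (\<lambda>E. msum d' (G E) K) Z $$ (p, q) =
    msum (d * d') (\<lambda>x. tensor_map d d' (\<lambda>E. F E (fst x)) (\<lambda>E. G E (snd x)) Z) (C \<times> K) $$ (p, q)" .
qed (auto simp: tensor_map_def)


lemma gen_span_uniform: assumes L: "lin_map n L"
  shows "\<exists>C. finite C \<and> (\<forall>X\<in>carrier_mat n n. \<exists>f. (\<forall>c\<in>C. f c \<in> gen_eigenspace n L c) \<and> X = msum n f C)"
proof -
  obtain C k where C: "finite C" "\<forall>c\<in>C. k c \<le> n * n"
    "\<forall>X\<in>carrier_mat n n. pev n L (\<Prod>c\<in>C. [:-c, 1:] ^ k c) X = 0\<^sub>m n n"
    using annihilator[OF L] by blast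
  show ?thesis
  proof (intro exI[of _ C] conjI ballI)
    show "finite C" by fact
    fix X :: "complex mat" assume X: "X \<in> carrier_mat n n"
    obtain f where f: "\<forall>c\<in>C. f c \<in> carrier_mat n n \<and> pev n L ([:-c, 1:] ^ k c) (f c) = 0\<^sub>m n n" "X = msum n f C"
      using span_decomp[OF L C(1) X] C(3) X by blast
    have fg: "f c \<in> gen_eigenspace n L c" if c: "c \<in> C" for c
    proof -
      have e: "[:-c, 1:] ^ (n * n) = [:-c, 1:] ^ (n * n - k c) * [:-c, 1:] ^ k c"
        using C(2) c by (simp add: power_add[symmetric])
      have "pev n L ([:-c, 1:] ^ (n * n)) (f c) = 0\<^sub>m n n"
        unfolding e using f(1) c by (simp add: pev_mult[OF L] pev_zero_arg[OF L])
      thus ?thesis unfolding gen_eigenspace_pev[OF L] using f(1) c by auto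
    qed
    show "\<exists>f. (\<forall>c\<in>C. f c \<in> gen_eigenspace n L c) \<and> X = msum n f C" using fg f(2) by blast
  qed
qed

lemma eig_gen: assumes L: "lin_map n L" and n: "0 < n" and Y: "Y \<in> carrier_mat n n" and e: "L Y = c \<cdot>\<^sub>m Y"
  shows "Y \<in> gen_eigenspace n L c"
proof -
  let ?phi = "\<lambda>Y. L Y - c \<cdot>\<^sub>m Y"
  have z: "?phi Y = 0\<^sub>m n n" using e Y lin_mapD(1)[OF L Y] by (intro eq_matI) auto
  obtain m where m: "n * n = Suc m" using n by (cases "n * n") auto
  have "(?phi ^^ (n * n)) Y = (?phi ^^ m) (?phi Y)" unfolding m funpow_Suc_right comp_def ..
  also have "\<dots> = 0\<^sub>m n n" unfolding z by (rule funpow_zero[OF phi_lin[OF L]])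
  finally show ?thesis unfolding gen_eigenspace_def using Y by simp
qed

lemma unimod_prod: fixes c e :: complex assumes "cmod c \<le> 1" "cmod e \<le> 1" "cmod (c * e) = 1"
  shows "cmod c = 1 \<and> cmod e = 1"
proof -
  have p: "cmod c * cmod e = 1" using assms(3) by (simp add: norm_mult)
  have "cmod c \<ge> 1"
  proof (rule ccontr)
    assume "\<not> cmod c \<ge> 1"
    moreover have "cmod c * cmod e \<le> cmod c * 1" using assms(2) by (intro mult_left_mono) auto
    ultimately have "cmod c * cmod e < 1" by simp
    thus False using p by simp
  qed
  moreover have "cmod e \<ge> 1"
  proof (rule ccontr)
    assume "\<not> cmod e \<ge> 1"
    moreover have "cmod c * cmod e \<le> 1 * cmod e" using assms(1) by (intro mult_right_mono) auto
    ultimately have "cmod c * cmod e < 1" by simp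
    thus False using p by simp
  qed
  ultimately show ?thesis using assms by simp
qed

lemma kron_lin_left: assumes A1: "A1 \<in> carrier_mat d d" and A2: "A2 \<in> carrier_mat d d" and B: "B \<in> carrier_mat d' d'"
  shows "mat_kron (A1 + A2) B = mat_kron A1 B + mat_kron A2 B" "mat_kron (a \<cdot>\<^sub>m A1) B = a \<cdot>\<^sub>m mat_kron A1 B"
proof -
  have C: "A1 + A2 \<in> carrier_mat d d" "a \<cdot>\<^sub>m A1 \<in> carrier_mat d d" using A1 A2 by auto
  show "mat_kron (A1 + A2) B = mat_kron A1 B + mat_kron A2 B"
  proof (rule eq_matI)
    fix p q assume "p < dim_row (mat_kron A1 B + mat_kron A2 B)" "q < dim_col (mat_kron A1 B + mat_kron A2 B)"
    hence pq: "p < d * d'" "q < d * d'" using carrier_matD[OF A1] carrier_matD[OF A2] carrier_matD[OF B] by auto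
    show "mat_kron (A1 + A2) B $$ (p, q) = (mat_kron A1 B + mat_kron A2 B) $$ (p, q)"
      using mat_kron_index[OF C(1) B pq] mat_kron_index[OF A1 B pq] mat_kron_index[OF A2 B pq]
        idx_bounds[OF pq(1)] idx_bounds[OF pq(2)] pq A1 A2 B by (simp add: algebra_simps)
  qed (use A1 A2 B in auto)
  show "mat_kron (a \<cdot>\<^sub>m A1) B = a \<cdot>\<^sub>m mat_kron A1 B"
  proof (rule eq_matI)
    fix p q assume "p < dim_row (a \<cdot>\<^sub>m mat_kron A1 B)" "q < dim_col (a \<cdot>\<^sub>m mat_kron A1 B)"
    hence pq: "p < d * d'" "q < d * d'" using carrier_matD[OF A1] carrier_matD[OF A2] carrier_matD[OF B] by auto
    show "mat_kron (a \<cdot>\<^sub>m A1) B $$ (p, q) = (a \<cdot>\<^sub>m mat_kron A1 B) $$ (p, q)"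
      using mat_kron_index[OF C(2) B pq] mat_kron_index[OF A1 B pq]
        idx_bounds[OF pq(1)] idx_bounds[OF pq(2)] pq A1 B by simp
  qed (use A1 B in auto)
qed

lemma kron_lin_right: assumes A: "A \<in> carrier_mat d d" and B1: "B1 \<in> carrier_mat d' d'" and B2: "B2 \<in> carrier_mat d' d'"
  shows "mat_kron A (B1 + B2) = mat_kron A B1 + mat_kron A B2" "mat_kron A (a \<cdot>\<^sub>m B1) = a \<cdot>\<^sub>m mat_kron A B1"
proof -
  have C: "B1 + B2 \<in> carrier_mat d' d'" "a \<cdot>\<^sub>m B1 \<in> carrier_mat d' d'" using B1 B2 by auto
  show "mat_kron A (B1 + B2) = mat_kron A B1 + mat_kron A B2"
  proof (rule eq_matI)
    fix p q assume "p < dim_row (mat_kron A B1 + mat_kron A B2)" "q < dim_col (mat_kron A B1 + mat_kron A B2)"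
    hence pq: "p < d * d'" "q < d * d'" using carrier_matD[OF A] carrier_matD[OF B1] carrier_matD[OF B2] by auto
    show "mat_kron A (B1 + B2) $$ (p, q) = (mat_kron A B1 + mat_kron A B2) $$ (p, q)"
      using mat_kron_index[OF A C(1) pq] mat_kron_index[OF A B1 pq] mat_kron_index[OF A B2 pq]
        idx_bounds[OF pq(1)] idx_bounds[OF pq(2)] pq A B1 B2 by (simp add: algebra_simps)
  qed (use A B1 B2 in auto)
  show "mat_kron A (a \<cdot>\<^sub>m B1) = a \<cdot>\<^sub>m mat_kron A B1"
  proof (rule eq_matI)
    fix p q assume "p < dim_row (a \<cdot>\<^sub>m mat_kron A B1)" "q < dim_col (a \<cdot>\<^sub>m mat_kron A B1)"
    hence pq: "p < d * d'" "q < d * d'" using carrier_matD[OF A] carrier_matD[OF B1] carrier_matD[OF B2] by auto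
    show "mat_kron A (a \<cdot>\<^sub>m B1) $$ (p, q) = (a \<cdot>\<^sub>m mat_kron A B1) $$ (p, q)"
      using mat_kron_index[OF A C(2) pq] mat_kron_index[OF A B1 pq]
        idx_bounds[OF pq(1)] idx_bounds[OF pq(2)] pq A B1 by simp
  qed (use A B1 in auto)
qed

lemma subsp_kron_left: assumes W: "subsp (d * d') W" and B: "B \<in> carrier_mat d' d'"
  shows "subsp d {A \<in> carrier_mat d d. mat_kron A B \<in> W}"
  unfolding subsp_def using kron_lin_left[OF _ _ B] kron_zero_left[OF B] subspD[OF W] by auto

lemma subsp_kron_right: assumes W: "subsp (d * d') W" and A: "A \<in> carrier_mat d d"
  shows "subsp d' {B \<in> carrier_mat d' d'. mat_kron A B \<in> W}"
  unfolding subsp_def using kron_lin_right[OF A] kron_zero_right[OF A] subspD[OF W] by auto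

lemma periph_eq: assumes L: "lin_map n L" and n: "0 < n"
  and BP: "\<And>X. X \<in> carrier_mat n n \<Longrightarrow> \<exists>B. \<forall>k p q. p < n \<longrightarrow> q < n \<longrightarrow> cmod ((L ^^ k) X $$ (p, q)) \<le> B"
  shows "peripheral_subspace n L = mat_span n (\<Union>c\<in>{c. cmod c = 1}. gen_eigenspace n L c)"
proof -
  have "{X \<in> carrier_mat n n. \<exists>c. cmod c = 1 \<and> L X = c \<cdot>\<^sub>m X} = (\<Union>c\<in>{c. cmod c = 1}. gen_eigenspace n L c)"
  proof
    show "{X \<in> carrier_mat n n. \<exists>c. cmod c = 1 \<and> L X = c \<cdot>\<^sub>m X} \<subseteq> (\<Union>c\<in>{c. cmod c = 1}. gen_eigenspace n L c)"
      using eig_gen[OF L n] by blast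
    show "(\<Union>c\<in>{c. cmod c = 1}. gen_eigenspace n L c) \<subseteq> {X \<in> carrier_mat n n. \<exists>c. cmod c = 1 \<and> L X = c \<cdot>\<^sub>m X}"
      using gen_unimod[OF L BP] gen_carrier by blast
  qed
  thus ?thesis unfolding peripheral_subspace_def by simp
qed


context fixes d d' T S
  assumes d: "0 < d" and d': "0 < d'" and chT: "quantum_channel d T" and chS: "quantum_channel d' S"
begin

lemma LT: "lin_map d T" by (rule ch_lin[OF chT])
lemma LS: "lin_map d' S" by (rule ch_lin[OF chS])
lemma LTS: "lin_map (d * d') (tensor_map d d' T S)" by (rule tensor_map_lin)

abbreviation "TP \<equiv> peripheral_projection d T"
abbreviation "SP \<equiv> peripheral_projection d' S"
abbreviation "QQ \<equiv> tensor_map d d' TP SP"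

lemma TPlin: "lin_map d TP" by (rule pp_lin[OF LT])
lemma SPlin: "lin_map d' SP" by (rule pp_lin[OF LS])
lemma QQlin: "lin_map (d * d') QQ" by (rule tensor_map_lin)

definition "CT = (SOME C. finite C \<and> (\<forall>X\<in>carrier_mat d d. \<exists>f. (\<forall>c\<in>C. f c \<in> gen_eigenspace d T c) \<and> X = msum d f C))"
definition "CS = (SOME C. finite C \<and> (\<forall>X\<in>carrier_mat d' d'. \<exists>f. (\<forall>c\<in>C. f c \<in> gen_eigenspace d' S c) \<and> X = msum d' f C))"

lemma CT_all: "finite CT \<and> (\<forall>X\<in>carrier_mat d d. \<exists>f. (\<forall>c\<in>CT. f c \<in> gen_eigenspace d T c) \<and> X = msum d f CT)"
  unfolding CT_def by (rule someI_ex[OF gen_span_uniform[OF LT]])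
lemma CS_all: "finite CS \<and> (\<forall>X\<in>carrier_mat d' d'. \<exists>f. (\<forall>c\<in>CS. f c \<in> gen_eigenspace d' S c) \<and> X = msum d' f CS)"
  unfolding CS_def by (rule someI_ex[OF gen_span_uniform[OF LS]])
lemmas CT = CT_all[THEN conjunct1] CT_all[THEN conjunct2]
lemmas CS = CS_all[THEN conjunct1] CS_all[THEN conjunct2]

definition "fT0 X = (SOME f. (\<forall>c\<in>CT. f c \<in> gen_eigenspace d T c) \<and> X = msum d f CT)"
definition "fS0 X = (SOME f. (\<forall>c\<in>CS. f c \<in> gen_eigenspace d' S c) \<and> X = msum d' f CS)"
definition "fT X c = (if c \<in> CT then fT0 X c else 0\<^sub>m d d)"
definition "fS X c = (if c \<in> CS then fS0 X c else 0\<^sub>m d' d')"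

lemma fT: assumes "X \<in> carrier_mat d d" shows "\<forall>c\<in>CT. fT X c \<in> gen_eigenspace d T c" "X = msum d (fT X) CT"
  "fT X c \<in> carrier_mat d d"
proof -
  have *: "(\<forall>c\<in>CT. fT0 X c \<in> gen_eigenspace d T c) \<and> X = msum d (fT0 X) CT"
    unfolding fT0_def by (rule someI_ex[OF CT(2)[rule_format, OF assms]])
  show "\<forall>c\<in>CT. fT X c \<in> gen_eigenspace d T c" using * unfolding fT_def by auto
  have "msum d (fT X) CT = msum d (fT0 X) CT" by (rule msum_cong) (simp add: fT_def)
  thus "X = msum d (fT X) CT" using * by simp
  show "fT X c \<in> carrier_mat d d" using * gen_carrier unfolding fT_def by (cases "c \<in> CT") auto
qed

lemma fS: assumes "X \<in> carrier_mat d' d'" shows "\<forall>c\<in>CS. fS X c \<in> gen_eigenspace d' S c" "X = msum d' (fS X) CS"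
  "fS X c \<in> carrier_mat d' d'"
proof -
  have *: "(\<forall>c\<in>CS. fS0 X c \<in> gen_eigenspace d' S c) \<and> X = msum d' (fS0 X) CS"
    unfolding fS0_def by (rule someI_ex[OF CS(2)[rule_format, OF assms]])
  show "\<forall>c\<in>CS. fS X c \<in> gen_eigenspace d' S c" using * unfolding fS_def by auto
  have "msum d' (fS X) CS = msum d' (fS0 X) CS" by (rule msum_cong) (simp add: fS_def)
  thus "X = msum d' (fS X) CS" using * by simp
  show "fS X c \<in> carrier_mat d' d'" using * gen_carrier unfolding fS_def by (cases "c \<in> CS") auto
qed

lemma fTu: "c \<in> CT \<Longrightarrow> fT (mat_unit d i j) c \<in> gen_eigenspace d T c"
  using fT(1)[OF mat_unit_carrier] by blast
lemma fSu: "c \<in> CS \<Longrightarrow> fS (mat_unit d' i j) c \<in> gen_eigenspace d' S c"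
  using fS(1)[OF mat_unit_carrier] by blast
lemma fTc: "fT (mat_unit d i j) c \<in> carrier_mat d d" by (rule fT(3)[OF mat_unit_carrier])
lemma fSc: "fS (mat_unit d' i j) c \<in> carrier_mat d' d'" by (rule fS(3)[OF mat_unit_carrier])

definition "hh Z x = tensor_map d d' (\<lambda>E. fT E (fst x)) (\<lambda>E. fS E (snd x)) Z"

lemma hh_msum: "x \<in> CT \<times> CS \<Longrightarrow> hh Z x = msum (d * d') (tmt d d' (\<lambda>E. fT E (fst x)) (\<lambda>E. fS E (snd x)) Z) (IDX d d')"
  unfolding hh_def by (rule tensor_map_msum) (rule fTc, rule fSc)

lemma hh_gen: assumes x: "x \<in> CT \<times> CS"
  shows "hh Z x \<in> gen_eigenspace (d * d') (tensor_map d d' T S) (fst x * snd x)"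
  unfolding hh_msum[OF x]
proof (rule subsp_msum[OF subsp_gen_eigenspace[OF LTS]])
  fix y assume y: "y \<in> IDX d d'"
  show "tmt d d' (\<lambda>E. fT E (fst x)) (\<lambda>E. fS E (snd x)) Z y \<in> gen_eigenspace (d * d') (tensor_map d d' T S) (fst x * snd x)"
  proof -
    have x1: "fst x \<in> CT" "snd x \<in> CS" using x by auto
    have "mat_kron (fT (mat_unit d (fst (fst y)) (snd (fst y))) (fst x)) (fS (mat_unit d' (fst (snd y)) (snd (snd y))) (snd x))
      \<in> gen_eigenspace (d * d') (tensor_map d d' T S) (fst x * snd x)"
      by (rule gen_kron[OF LT LS d d' fTu[OF x1(1)] fSu[OF x1(2)]])
    thus ?thesis unfolding tmt_def by (rule subspD(4)[OF subsp_gen_eigenspace[OF LTS]])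
  qed
qed

lemma hh_sum: assumes Z: "Z \<in> carrier_mat (d * d') (d * d')"
  shows "Z = msum (d * d') (hh Z) (CT \<times> CS)"
proof -
  have "Z = tensor_map d d' id id Z" using tensor_map_id[OF Z] by simp
  also have "\<dots> = tensor_map d d' (\<lambda>E. msum d (fT E) CT) (\<lambda>E. msum d' (fS E) CS) Z"
    by (rule tensor_map_cong) (use fT(2)[OF mat_unit_carrier] fS(2)[OF mat_unit_carrier] in auto)
  also have "\<dots> = msum (d * d') (hh Z) (CT \<times> CS)"
    unfolding hh_def by (rule tensor_map_sum[OF CT(1) CS(1)]) (rule fTc, rule fSc)
  finally show ?thesis .
qed


lemma tmt_carrier: "tmt d d' (\<lambda>E. fT E c) (\<lambda>E. fS E e) Z y \<in> carrier_mat (d * d') (d * d')"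
  unfolding tmt_def by (intro smult_carrier_mat mat_kron_carrier fTc fSc)

lemma hh_carrier: "x \<in> CT \<times> CS \<Longrightarrow> hh Z x \<in> carrier_mat (d * d') (d * d')"
  using hh_msum by simp

lemma TP_val: "c \<in> CT \<Longrightarrow> TP (fT (mat_unit d i j) c) = (if cmod c = 1 then fT (mat_unit d i j) c else 0\<^sub>m d d)"
  using pp_fix[OF LT _ fTu] pp_kill[OF LT _ fTu] by auto
lemma SP_val: "c \<in> CS \<Longrightarrow> SP (fS (mat_unit d' i j) c) = (if cmod c = 1 then fS (mat_unit d' i j) c else 0\<^sub>m d' d')"
  using pp_fix[OF LS _ fSu] pp_kill[OF LS _ fSu] by auto

lemma tmt_Q: assumes x: "x \<in> CT \<times> CS"
  shows "QQ (tmt d d' (\<lambda>E. fT E (fst x)) (\<lambda>E. fS E (snd x)) Z y) =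
    (if cmod (fst x) = 1 \<and> cmod (snd x) = 1 then tmt d d' (\<lambda>E. fT E (fst x)) (\<lambda>E. fS E (snd x)) Z y else 0\<^sub>m (d * d') (d * d'))"
proof -
  have x1: "fst x \<in> CT" "snd x \<in> CS" using x by auto
  let ?A = "fT (mat_unit d (fst (fst y)) (snd (fst y))) (fst x)"
  let ?B = "fS (mat_unit d' (fst (snd y)) (snd (snd y))) (snd x)"
  let ?z = "Z $$ (fst (fst y) * d' + fst (snd y), snd (fst y) * d' + snd (snd y))"
  have "QQ (tmt d d' (\<lambda>E. fT E (fst x)) (\<lambda>E. fS E (snd x)) Z y) = ?z \<cdot>\<^sub>m QQ (mat_kron ?A ?B)"
    unfolding tmt_def by (rule lin_mapD(3)[OF QQlin mat_kron_carrier[OF fTc fSc]])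
  also have "QQ (mat_kron ?A ?B) = mat_kron (TP ?A) (SP ?B)"
    by (rule tensor_map_kron[OF TPlin SPlin fTc fSc])
  finally have e: "QQ (tmt d d' (\<lambda>E. fT E (fst x)) (\<lambda>E. fS E (snd x)) Z y) = ?z \<cdot>\<^sub>m mat_kron (TP ?A) (SP ?B)" .
  show ?thesis
  proof (cases "cmod (fst x) = 1 \<and> cmod (snd x) = 1")
    case True
    thus ?thesis by (subst e) (simp add: TP_val[OF x1(1)] SP_val[OF x1(2)] tmt_def)
  next
    case False
    hence kz: "mat_kron (TP ?A) (SP ?B) = 0\<^sub>m (d * d') (d * d')"
      unfolding TP_val[OF x1(1)] SP_val[OF x1(2)] using kron_zero_left[OF fSc] kron_zero_right[OF fTc] kron_zero_left[of "0\<^sub>m d' d'" d' d, OF zero_carrier_mat] by auto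
    show ?thesis unfolding e if_not_P[OF False] kz by simp
  qed
qed

lemma hh_Q: assumes x: "x \<in> CT \<times> CS"
  shows "QQ (hh Z x) = (if cmod (fst x) = 1 \<and> cmod (snd x) = 1 then hh Z x else 0\<^sub>m (d * d') (d * d'))"
proof -
  have "QQ (hh Z x) = msum (d * d') (\<lambda>y. QQ (tmt d d' (\<lambda>E. fT E (fst x)) (\<lambda>E. fS E (snd x)) Z y)) (IDX d d')"
    unfolding hh_msum[OF x] by (rule lin_msum[OF QQlin tmt_carrier])
  also have "\<dots> = msum (d * d') (\<lambda>y. if cmod (fst x) = 1 \<and> cmod (snd x) = 1 then tmt d d' (\<lambda>E. fT E (fst x)) (\<lambda>E. fS E (snd x)) Z y else 0\<^sub>m (d * d') (d * d')) (IDX d d')"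
    by (rule msum_cong) (rule tmt_Q[OF x])
  also have "\<dots> = (if cmod (fst x) = 1 \<and> cmod (snd x) = 1 then hh Z x else 0\<^sub>m (d * d') (d * d'))"
    unfolding hh_msum[OF x] by (auto intro: msum_zero)
  finally show ?thesis .
qed

lemma hh_zero: assumes x: "x \<in> CT \<times> CS" and nb: "\<not> (cmod (fst x) \<le> 1 \<and> cmod (snd x) \<le> 1)"
  shows "hh Z x = 0\<^sub>m (d * d') (d * d')"
proof -
  have x1: "fst x \<in> CT" "snd x \<in> CS" using x by auto
  have "tmt d d' (\<lambda>E. fT E (fst x)) (\<lambda>E. fS E (snd x)) Z y = 0\<^sub>m (d * d') (d * d')" for y
  proof (cases "cmod (fst x) \<le> 1")
    case True
    hence big: "\<not> cmod (snd x) \<le> 1" using nb by auto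
    have "fS (mat_unit d' (fst (snd y)) (snd (snd y))) (snd x) = 0\<^sub>m d' d'"
      using gen_bound[OF LS ch_bounded[OF chS] fSu[OF x1(2)]] big by blast
    thus ?thesis unfolding tmt_def using kron_zero_right[OF fTc] by simp
  next
    case False
    have "fT (mat_unit d (fst (fst y)) (snd (fst y))) (fst x) = 0\<^sub>m d d"
      using gen_bound[OF LT ch_bounded[OF chT] fTu[OF x1(1)]] False by blast
    thus ?thesis unfolding tmt_def using kron_zero_left[OF fSc] by simp
  qed
  thus ?thesis unfolding hh_msum[OF x] by (intro msum_zero)
qed

lemma decomp_eig: assumes Z: "Z \<in> gen_eigenspace (d * d') (tensor_map d d' T S) \<mu>"
  shows "Z = msum (d * d') (hh Z) {x \<in> CT \<times> CS. fst x * snd x = \<mu>}"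
proof -
  let ?G = "gen_eigenspace (d * d') (tensor_map d d' T S)"
  have ZC: "Z \<in> carrier_mat (d * d') (d * d')" using Z by (rule gen_carrier)
  have fin: "finite (CT \<times> CS)" using CT(1) CS(1) by simp
  define A where "A = msum (d * d') (hh Z) {x \<in> CT \<times> CS. fst x * snd x = \<mu>}"
  define B where "B = msum (d * d') (hh Z) {x \<in> CT \<times> CS. \<not> fst x * snd x = \<mu>}"
  have ZAB: "Z = A + B" unfolding A_def B_def using hh_sum[OF ZC] msum_split[OF fin] by metis
  have AG: "A \<in> ?G \<mu>" unfolding A_def
    by (rule subsp_msum[OF subsp_gen_eigenspace[OF LTS]]) (use hh_gen in auto)
  have AC: "A \<in> carrier_mat (d * d') (d * d')" unfolding A_def by simp
  have BC: "B \<in> carrier_mat (d * d') (d * d')" unfolding B_def by simp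
  have "B = Z - A" unfolding ZAB using AC BC by (intro eq_matI) auto
  hence BG: "B \<in> ?G \<mu>" using subsp_minus[OF subsp_gen_eigenspace[OF LTS] Z AG] by simp
  have "B = 0\<^sub>m (d * d') (d * d')"
    by (rule gen_indep[OF LTS _ BG _ B_def]) (use fin hh_gen in auto)
  thus ?thesis using ZAB AC unfolding A_def[symmetric] by simp
qed

lemma fix1: assumes mu: "cmod \<mu> = 1" and Z: "Z \<in> gen_eigenspace (d * d') (tensor_map d d' T S) \<mu>"
  shows "QQ Z = Z"
proof -
  let ?I = "{x \<in> CT \<times> CS. fst x * snd x = \<mu>}"
  have "QQ Z = msum (d * d') (\<lambda>x. QQ (hh Z x)) ?I"
    by (subst decomp_eig[OF Z], rule lin_msum[OF QQlin]) (auto intro: hh_carrier)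
  also have "\<dots> = msum (d * d') (hh Z) ?I"
  proof (rule msum_cong)
    fix x assume x: "x \<in> ?I"
    hence xI: "x \<in> CT \<times> CS" and xm: "cmod (fst x * snd x) = 1" using mu by auto
    show "QQ (hh Z x) = hh Z x"
    proof (cases "cmod (fst x) \<le> 1 \<and> cmod (snd x) \<le> 1")
      case True
      hence "cmod (fst x) = 1 \<and> cmod (snd x) = 1" using unimod_prod xm by blast
      thus ?thesis using hh_Q[OF xI] by simp
    next
      case False
      thus ?thesis using hh_zero[OF xI False] lin_zero[OF QQlin] by simp
    qed
  qed
  also have "\<dots> = Z" using decomp_eig[OF Z] by simp
  finally show ?thesis .
qed

lemma kill1: assumes mu: "cmod \<mu> \<noteq> 1" and Z: "Z \<in> gen_eigenspace (d * d') (tensor_map d d' T S) \<mu>"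
  shows "QQ Z = 0\<^sub>m (d * d') (d * d')"
proof -
  let ?I = "{x \<in> CT \<times> CS. fst x * snd x = \<mu>}"
  have "QQ Z = msum (d * d') (\<lambda>x. QQ (hh Z x)) ?I"
    by (subst decomp_eig[OF Z], rule lin_msum[OF QQlin]) (auto intro: hh_carrier)
  also have "\<dots> = 0\<^sub>m (d * d') (d * d')"
  proof (rule msum_zero)
    fix x assume x: "x \<in> ?I"
    hence xI: "x \<in> CT \<times> CS" and xm: "fst x * snd x = \<mu>" by auto
    have n: "\<not> (cmod (fst x) = 1 \<and> cmod (snd x) = 1)"
    proof
      assume "cmod (fst x) = 1 \<and> cmod (snd x) = 1"
      hence "cmod \<mu> = 1" unfolding xm[symmetric] by (simp add: norm_mult)
      thus False using mu by simp
    qed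
    show "QQ (hh Z x) = 0\<^sub>m (d * d') (d * d')" unfolding hh_Q[OF xI] if_not_P[OF n] ..
  qed
  finally show ?thesis .
qed

lemma spnTS: assumes Z: "Z \<in> carrier_mat (d * d') (d * d')"
  shows "\<exists>(I :: (complex \<times> complex) set) g \<nu>. finite I \<and>
    (\<forall>i\<in>I. g i \<in> gen_eigenspace (d * d') (tensor_map d d' T S) (\<nu> i)) \<and> Z = msum (d * d') g I"
  using CT(1) CS(1) hh_gen hh_sum[OF Z]
  by (intro exI[of _ "CT \<times> CS"] exI[of _ "hh Z"] exI[of _ "\<lambda>x. fst x * snd x"]) auto

lemma main1: assumes X: "X \<in> carrier_mat (d * d') (d * d')"
  shows "peripheral_projection (d * d') (tensor_map d d' T S) X = QQ X"
  by (rule pp_eq[OF LTS QQlin spnTS fix1 kill1 X])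


lemma Dpos: "0 < d * d'" using d d' by simp

lemma chiT: "peripheral_subspace d T = mat_span d (\<Union>c\<in>{c. cmod c = 1}. gen_eigenspace d T c)"
  by (rule periph_eq[OF LT d ch_bounded[OF chT]])
lemma chiS: "peripheral_subspace d' S = mat_span d' (\<Union>c\<in>{c. cmod c = 1}. gen_eigenspace d' S c)"
  by (rule periph_eq[OF LS d' ch_bounded[OF chS]])

lemma part2a: "peripheral_subspace (d * d') (tensor_map d d' T S)
   \<subseteq> tensor_subspace d d' (peripheral_subspace d T) (peripheral_subspace d' S)"
  unfolding peripheral_subspace_def[of "d * d'"] tensor_subspace_def
proof (rule span_sub[OF subsp_span])
  let ?W = "mat_span (d * d') {mat_kron A B |A B. A \<in> peripheral_subspace d T \<and> B \<in> peripheral_subspace d' S}"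
  show "{X \<in> carrier_mat (d * d') (d * d'). \<exists>c. cmod c = 1 \<and> tensor_map d d' T S X = c \<cdot>\<^sub>m X} \<subseteq> ?W"
  proof
    fix Y assume "Y \<in> {X \<in> carrier_mat (d * d') (d * d'). \<exists>c. cmod c = 1 \<and> tensor_map d d' T S X = c \<cdot>\<^sub>m X}"
    then obtain \<mu> where Y: "Y \<in> carrier_mat (d * d') (d * d')" "cmod \<mu> = 1" "tensor_map d d' T S Y = \<mu> \<cdot>\<^sub>m Y" by blast
    have YG: "Y \<in> gen_eigenspace (d * d') (tensor_map d d' T S) \<mu>" by (rule eig_gen[OF LTS Dpos Y(1) Y(3)])
    have "Y = peripheral_projection (d * d') (tensor_map d d' T S) Y" using pp_fix[OF LTS Y(2) YG] by simp
    also have "\<dots> = QQ Y" by (rule main1[OF Y(1)])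
    also have "\<dots> = msum (d * d') (tmt d d' TP SP Y) (IDX d d')"
      by (rule tensor_map_msum) (auto intro: lin_mapD(1)[OF TPlin] lin_mapD(1)[OF SPlin])
    also have "\<dots> \<in> ?W"
    proof (rule subsp_msum[OF subsp_span])
      fix y assume "y \<in> IDX d d'"
      let ?A = "TP (mat_unit d (fst (fst y)) (snd (fst y)))"
      let ?B = "SP (mat_unit d' (fst (snd y)) (snd (snd y)))"
      have A: "?A \<in> peripheral_subspace d T" unfolding chiT by (rule pp_range[OF LT mat_unit_carrier])
      have B: "?B \<in> peripheral_subspace d' S" unfolding chiS by (rule pp_range[OF LS mat_unit_carrier])
      have AC: "?A \<in> carrier_mat d d" by (rule lin_mapD(1)[OF TPlin mat_unit_carrier])
      have BC: "?B \<in> carrier_mat d' d'" by (rule lin_mapD(1)[OF SPlin mat_unit_carrier])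
      have "mat_kron ?A ?B \<in> ?W" by (rule span_in) (use A B mat_kron_carrier[OF AC BC] in blast)+
      thus "tmt d d' TP SP Y y \<in> ?W" unfolding tmt_def by (rule subspD(4)[OF subsp_span])
    qed
    finally show "Y \<in> ?W" .
  qed
qed

lemma kron_eig: assumes A: "A \<in> carrier_mat d d" "T A = c \<cdot>\<^sub>m A" and B: "B \<in> carrier_mat d' d'" "S B = e \<cdot>\<^sub>m B"
  shows "tensor_map d d' T S (mat_kron A B) = (c * e) \<cdot>\<^sub>m mat_kron A B"
proof -
  have "tensor_map d d' T S (mat_kron A B) = mat_kron (c \<cdot>\<^sub>m A) (e \<cdot>\<^sub>m B)"
    using tensor_map_kron[OF LT LS A(1) B(1)] A B by simp
  also have "\<dots> = c \<cdot>\<^sub>m mat_kron A (e \<cdot>\<^sub>m B)" using kron_lin_left(2)[OF A(1) A(1) smult_carrier_mat[OF B(1)]] by simp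
  also have "\<dots> = c \<cdot>\<^sub>m (e \<cdot>\<^sub>m mat_kron A B)" using kron_lin_right(2)[OF A(1) B(1) B(1)] by simp
  also have "\<dots> = (c * e) \<cdot>\<^sub>m mat_kron A B" using mat_kron_carrier[OF A(1) B(1)] by (intro eq_matI) auto
  finally show ?thesis .
qed

lemma part2b: "tensor_subspace d d' (peripheral_subspace d T) (peripheral_subspace d' S)
   \<subseteq> peripheral_subspace (d * d') (tensor_map d d' T S)"
  unfolding tensor_subspace_def
proof (rule span_sub)
  let ?W = "peripheral_subspace (d * d') (tensor_map d d' T S)"
  let ?ET = "{X \<in> carrier_mat d d. \<exists>c. cmod c = 1 \<and> T X = c \<cdot>\<^sub>m X}"
  let ?ES = "{X \<in> carrier_mat d' d'. \<exists>c. cmod c = 1 \<and> S X = c \<cdot>\<^sub>m X}"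
  show W: "subsp (d * d') ?W" unfolding peripheral_subspace_def by (rule subsp_span)
  have s1: "mat_kron A B \<in> ?W" if A: "A \<in> ?ET" and B: "B \<in> ?ES" for A B
  proof -
    obtain c where c: "A \<in> carrier_mat d d" "cmod c = 1" "T A = c \<cdot>\<^sub>m A" using A by blast
    obtain e where e: "B \<in> carrier_mat d' d'" "cmod e = 1" "S B = e \<cdot>\<^sub>m B" using B by blast
    have "cmod (c * e) = 1" using c e by (simp add: norm_mult)
    hence "mat_kron A B \<in> {X \<in> carrier_mat (d * d') (d * d'). \<exists>c. cmod c = 1 \<and> tensor_map d d' T S X = c \<cdot>\<^sub>m X}"
      using kron_eig[OF c(1,3) e(1,3)] mat_kron_carrier[OF c(1) e(1)] by blast
    thus ?thesis unfolding peripheral_subspace_def by (rule span_in) (rule mat_kron_carrier[OF c(1) e(1)])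
  qed
  have s2: "mat_kron A B \<in> ?W" if A: "A \<in> peripheral_subspace d T" and B: "B \<in> ?ES" for A B
  proof -
    have BC: "B \<in> carrier_mat d' d'" using B by blast
    have "peripheral_subspace d T \<subseteq> {A \<in> carrier_mat d d. mat_kron A B \<in> ?W}"
      unfolding peripheral_subspace_def[of d T]
      by (rule span_sub[OF subsp_kron_left[OF W BC]]) (use s1 B in blast)
    thus ?thesis using A by blast
  qed
  have s3: "mat_kron A B \<in> ?W" if A: "A \<in> peripheral_subspace d T" and B: "B \<in> peripheral_subspace d' S" for A B
  proof -
    have AC: "A \<in> carrier_mat d d" using A unfolding peripheral_subspace_def mat_span_def by blast
    have "peripheral_subspace d' S \<subseteq> {B \<in> carrier_mat d' d'. mat_kron A B \<in> ?W}"
      unfolding peripheral_subspace_def[of d' S]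
      by (rule span_sub[OF subsp_kron_right[OF W AC]]) (use s2 A in blast)
    thus ?thesis using B by blast
  qed
  show "{mat_kron A B |A B. A \<in> peripheral_subspace d T \<and> B \<in> peripheral_subspace d' S} \<subseteq> ?W"
    using s3 by blast
qed

lemma main: "(\<forall>X \<in> carrier_mat (d * d') (d * d').
            peripheral_projection (d * d') (tensor_map d d' T S) X
          = tensor_map d d' (peripheral_projection d T) (peripheral_projection d' S) X)
       \<and> peripheral_subspace (d * d') (tensor_map d d' T S)
          = tensor_subspace d d' (peripheral_subspace d T) (peripheral_subspace d' S)"
  using main1 part2a part2b by blast

end

theorem lemma1:
  fixes T S :: "complex mat \<Rightarrow> complex mat" and d d' :: nat
  assumes "0 < d" and "0 < d'"
    and "quantum_channel d T" and "quantum_channel d' S"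
  shows "(\<forall>X \<in> carrier_mat (d * d') (d * d').
            peripheral_projection (d * d') (tensor_map d d' T S) X
          = tensor_map d d' (peripheral_projection d T) (peripheral_projection d' S) X)
       \<and> peripheral_subspace (d * d') (tensor_map d d' T S)
          = tensor_subspace d d' (peripheral_subspace d T) (peripheral_subspace d' S)"
  by (rule main[OF assms])


end
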